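(* Let $m,p,n$ be positive integers with $p\mid m$, $n>1$, $G=G(m,p,n)$, and let $\mathbf T=(T_1,\ldots,T_n)$ be a tuple of commuting contractions on a Hilbert space. Then $\boldsymbol\theta(\mathbf T)=(\theta_1(\mathbf T),\dots,\theta_n(\mathbf T))$ is a $\boldsymbol\Theta_n$-contraction if and only if $\mathbf T$ satisfies von Neumann's inequality for all $G$-invariant polynomials, i.e. $\|q(\mathbf T)\|\le\sup_{\overline{\mathbb D}^n}|q|$ for every $G$-invariant $q\in\mathbb C[z_1,\ldots,z_n]$.
   Context: Put $q_0=m/p$. $G(m,p,n)$ is the group of $n\times n$ monomial matrices whose nonzero entries are $m$-th roots of unity and whose product of nonzero entries is an $(m/p)$-th root of unity; it acts on $\mathbb C^n$ by $\sigma\cdot z=\sigma^{-1}z$, and a polynomial $q$ is $G$-invariant if $q(\sigma^{-1}\cdot z)=q(z)$ for all $\sigma\in G$. $\theta_i(z)=s_i(z_1^m,\ldots,z_n^m)$ for $1\le i\le n-1$ ($s_i$ the $i$-th elementary symmetric polynomial), $\theta_n(z)=(z_1\cdots z_n)^{q_0}$, $\boldsymbol\Theta_n=\boldsymbol\theta(\mathbb D^n)$, $\overline{\boldsymbol\Theta}_n=\boldsymbol\theta(\overline{\mathbb D}^n)$. A commuting tuple $(S_1,\dots,S_n)$ is a $\boldsymbol\Theta_n$-contraction if $\|f(S_1,\dots,S_n)\|\le\sup_{\overline{\boldsymbol\Theta}_n}|f|$ for every polynomial $f$. *)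

theory Defs
  imports "HOL-Analysis.Analysis" "HOL-Library.Poly_Mapping"
begin

text \<open>A complex Hilbert space is such a space which is moreover complete.\<close>

class complex_inner = real_normed_vector +
  fixes scaleC :: "complex \<Rightarrow> 'a \<Rightarrow> 'a" (infixr \<open>*\<^sub>C\<close> 75)
    and cinner :: "'a \<Rightarrow> 'a \<Rightarrow> complex"
  assumes scaleC_of_real: "scaleC (complex_of_real r) x = scaleR r x"
    and scaleC_add_right: "scaleC a (x + y) = scaleC a x + scaleC a y"
    and scaleC_add_left: "scaleC (a + b) x = scaleC a x + scaleC b x"
    and scaleC_scaleC: "scaleC a (scaleC b x) = scaleC (a * b) x"
    and scaleC_one: "scaleC 1 x = x"
    and cinner_commute: "cinner x y = cnj (cinner y x)"
    and cinner_add_left: "cinner (x + y) z = cinner x z + cinner y z"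
    and cinner_scaleC_left: "cinner (scaleC a x) y = cnj a * cinner x y"
    and cinner_self_norm: "cinner x x = complex_of_real ((norm x)\<^sup>2)"

definition bounded_clinear_op :: "('h::complex_inner \<Rightarrow> 'h) \<Rightarrow> bool" where
  "bounded_clinear_op T \<longleftrightarrow> bounded_linear T \<and> (\<forall>c x. T (c *\<^sub>C x) = c *\<^sub>C T x)"

type_synonym cpoly = "(nat \<Rightarrow>\<^sub>0 nat) \<Rightarrow>\<^sub>0 complex"

definition poly_in_vars :: "nat \<Rightarrow> cpoly \<Rightarrow> bool" where
  "poly_in_vars n q \<longleftrightarrow> (\<forall>\<alpha>::nat \<Rightarrow>\<^sub>0 nat\<in>Poly_Mapping.keys q. Poly_Mapping.keys \<alpha> \<subseteq> {..<n})"

definition peval :: "cpoly \<Rightarrow> (nat \<Rightarrow> complex) \<Rightarrow> complex" where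
  "peval q z = (\<Sum>\<alpha>\<in>Poly_Mapping.keys q. Poly_Mapping.lookup q \<alpha> * (\<Prod>i\<in>Poly_Mapping.keys \<alpha>. z i ^ Poly_Mapping.lookup \<alpha> i))"

definition mono_op :: "(nat \<Rightarrow> 'h \<Rightarrow> 'h) \<Rightarrow> (nat \<Rightarrow>\<^sub>0 nat) \<Rightarrow> 'h \<Rightarrow> 'h" where
  "mono_op T \<alpha> = foldr (\<lambda>i f. (T i ^^ Poly_Mapping.lookup \<alpha> i) \<circ> f) (sorted_list_of_set (Poly_Mapping.keys \<alpha>)) id"

definition opeval :: "cpoly \<Rightarrow> (nat \<Rightarrow> 'h::complex_inner \<Rightarrow> 'h) \<Rightarrow> 'h \<Rightarrow> 'h" where
  "opeval q T = (\<lambda>x. \<Sum>\<alpha>\<in>Poly_Mapping.keys q. Poly_Mapping.lookup q \<alpha> *\<^sub>C mono_op T \<alpha> x)"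

text \<open>Points of C^n are functions nat => complex vanishing from index n on.\<close>
definition closed_polydisc :: "nat \<Rightarrow> (nat \<Rightarrow> complex) set" where
  "closed_polydisc n = {z. (\<forall>i<n. cmod (z i) \<le> 1) \<and> (\<forall>i\<ge>n. z i = 0)}"

text \<open>The polynomial theta_(k+1) (0-based index k < n):
  theta_i = s_i(z_1^m,...,z_n^m) for 1 <= i <= n-1, theta_n = (z_1...z_n)^(m/p).\<close>
definition theta_poly :: "nat \<Rightarrow> nat \<Rightarrow> nat \<Rightarrow> nat \<Rightarrow> cpoly" where
  "theta_poly m p n k =
     (if k + 1 < n then
        (\<Sum>S\<in>{S. S \<subseteq> {..<n} \<and> card S = k + 1}.
            Poly_Mapping.single (\<Sum>j\<in>S. Poly_Mapping.single j m) 1)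
      else if k + 1 = n then
        Poly_Mapping.single (\<Sum>j<n. Poly_Mapping.single j (m div p)) 1
      else 0)"

definition theta :: "nat \<Rightarrow> nat \<Rightarrow> nat \<Rightarrow> (nat \<Rightarrow> complex) \<Rightarrow> (nat \<Rightarrow> complex)" where
  "theta m p n z = (\<lambda>k. peval (theta_poly m p n k) z)"

definition closed_Theta :: "nat \<Rightarrow> nat \<Rightarrow> nat \<Rightarrow> (nat \<Rightarrow> complex) set" where
  "closed_Theta m p n = theta m p n ` closed_polydisc n"

definition theta_op :: "nat \<Rightarrow> nat \<Rightarrow> nat \<Rightarrow> (nat \<Rightarrow> 'h::complex_inner \<Rightarrow> 'h) \<Rightarrow> nat \<Rightarrow> 'h \<Rightarrow> 'h" where
  "theta_op m p n T = (\<lambda>k. opeval (theta_poly m p n k) T)"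

definition commuting_tuple :: "nat \<Rightarrow> (nat \<Rightarrow> 'h::complex_inner \<Rightarrow> 'h) \<Rightarrow> bool" where
  "commuting_tuple n T \<longleftrightarrow>
     (\<forall>i<n. bounded_clinear_op (T i)) \<and> (\<forall>i<n. \<forall>j<n. T i \<circ> T j = T j \<circ> T i)"

definition commuting_contractions :: "nat \<Rightarrow> (nat \<Rightarrow> 'h::complex_inner \<Rightarrow> 'h) \<Rightarrow> bool" where
  "commuting_contractions n T \<longleftrightarrow> commuting_tuple n T \<and> (\<forall>i<n. onorm (T i) \<le> 1)"

definition Theta_contraction :: "nat \<Rightarrow> nat \<Rightarrow> nat \<Rightarrow> (nat \<Rightarrow> 'h::complex_inner \<Rightarrow> 'h) \<Rightarrow> bool" where
  "Theta_contraction m p n S \<longleftrightarrow> commuting_tuple n S \<and>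
     (\<forall>f. poly_in_vars n f \<longrightarrow>
        onorm (opeval f S) \<le> (SUP w\<in>closed_Theta m p n. cmod (peval f w)))"

text \<open>n x n matrices as functions nat => nat => complex, zero outside {..<n}^2.
A monomial matrix A has A i j = zeta i if j = sigma i, else 0, for a permutation
sigma of {..<n}.\<close>
definition Gmpn :: "nat \<Rightarrow> nat \<Rightarrow> nat \<Rightarrow> (nat \<Rightarrow> nat \<Rightarrow> complex) set" where
  "Gmpn m p n = {A. \<exists>\<sigma> \<zeta>. \<sigma> permutes {..<n} \<and>
       (\<forall>i j. A i j = (if i < n \<and> j < n \<and> j = \<sigma> i then \<zeta> i else 0)) \<and>
       (\<forall>i<n. \<zeta> i ^ m = 1) \<and> (\<Prod>i<n. \<zeta> i) ^ (m div p) = 1}"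

definition matvec :: "nat \<Rightarrow> (nat \<Rightarrow> nat \<Rightarrow> complex) \<Rightarrow> (nat \<Rightarrow> complex) \<Rightarrow> (nat \<Rightarrow> complex)" where
  "matvec n A z = (\<lambda>i. \<Sum>j<n. A i j * z j)"

text \<open>sigma . z = sigma^(-1) z; q is G-invariant iff q(sigma^(-1) . z) = q(z), i.e.
q(sigma z) = q(z) for all sigma in G (G being closed under inverses).\<close>
definition G_invariant :: "nat \<Rightarrow> nat \<Rightarrow> nat \<Rightarrow> cpoly \<Rightarrow> bool" where
  "G_invariant m p n q \<longleftrightarrow>
     (\<forall>A\<in>Gmpn m p n. \<forall>z. peval q (matvec n A z) = peval q z)"

end

theory Submission
  imports Defs
begin

abbreviation lk where "lk \<equiv> Poly_Mapping.lookup"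
abbreviation ks where "ks \<equiv> Poly_Mapping.keys"
abbreviation sg where "sg \<equiv> Poly_Mapping.single"

definition mv :: "(nat \<Rightarrow>\<^sub>0 nat) \<Rightarrow> (nat \<Rightarrow> complex) \<Rightarrow> complex" where
  "mv \<alpha> z = (\<Prod>i\<in>ks \<alpha>. z i ^ lk \<alpha> i)"

lemma mv_superset: "finite K \<Longrightarrow> ks \<alpha> \<subseteq> K \<Longrightarrow> mv \<alpha> z = (\<Prod>i\<in>K. z i ^ lk \<alpha> i)"
  unfolding mv_def by (rule prod.mono_neutral_left) (auto simp: in_keys_iff)

lemma mv_add: "mv (\<alpha> + \<beta>) z = mv \<alpha> z * mv \<beta> z"
proof -
  let ?K = "ks \<alpha> \<union> ks \<beta>"
  have "mv (\<alpha> + \<beta>) z = (\<Prod>i\<in>?K. z i ^ lk (\<alpha>+\<beta>) i)"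
    by (rule mv_superset) (auto simp: keys_add)
  also have "\<dots> = (\<Prod>i\<in>?K. z i ^ lk \<alpha> i) * (\<Prod>i\<in>?K. z i ^ lk \<beta> i)"
    by (simp add: lookup_add power_add prod.distrib)
  also have "\<dots> = mv \<alpha> z * mv \<beta> z"
    by (simp add: mv_superset[of "ks \<alpha> \<union> ks \<beta>" \<alpha>] mv_superset[of "ks \<alpha> \<union> ks \<beta>" \<beta>])
  finally show ?thesis .
qed

lemma mv_zero[simp]: "mv 0 z = 1" by (simp add: mv_def)

lemma mv_single[simp]: "mv (sg j e) z = z j ^ e"
  by (simp add: mv_def)

lemma mv_sum: "mv (\<Sum>j\<in>S. f j) z = (\<Prod>j\<in>S. mv (f j) z)"
  by (induction S rule: infinite_finite_induct) (auto simp: mv_add)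

lemma mv_mult_pt: "mv \<alpha> (\<lambda>i. a i * b i) = mv \<alpha> a * mv \<alpha> b"
  by (simp add: mv_def power_mult_distrib prod.distrib)

lemma mv_cong: "(\<And>i. i \<in> ks \<alpha> \<Longrightarrow> z i = w i) \<Longrightarrow> mv \<alpha> z = mv \<alpha> w"
  by (simp add: mv_def)

lemma peval_superset: "finite K \<Longrightarrow> ks q \<subseteq> K \<Longrightarrow> peval q z = (\<Sum>\<alpha>\<in>K. lk q \<alpha> * mv \<alpha> z)"
  unfolding peval_def mv_def[symmetric] by (rule sum.mono_neutral_left) (auto simp: in_keys_iff)

lemma peval_alt: "peval q z = (\<Sum>\<alpha>\<in>ks q. lk q \<alpha> * mv \<alpha> z)"
  by (simp add: peval_def mv_def)

lemma peval_add: "peval (p + q) z = peval p z + peval q z"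
proof -
  let ?K = "ks p \<union> ks q"
  have "peval (p + q) z = (\<Sum>\<alpha>\<in>?K. lk (p+q) \<alpha> * mv \<alpha> z)"
    by (rule peval_superset) (auto simp: keys_add)
  also have "\<dots> = (\<Sum>\<alpha>\<in>?K. lk p \<alpha> * mv \<alpha> z) + (\<Sum>\<alpha>\<in>?K. lk q \<alpha> * mv \<alpha> z)"
    by (simp add: lookup_add distrib_right sum.distrib)
  also have "\<dots> = peval p z + peval q z"
    by (simp add: peval_superset[of "ks p \<union> ks q" p] peval_superset[of "ks p \<union> ks q" q])
  finally show ?thesis .
qed

lemma peval_zero[simp]: "peval 0 z = 0" by (simp add: peval_def)

lemma peval_single[simp]: "peval (sg \<alpha> c) z = c * mv \<alpha> z"
  by (simp add: peval_alt)

lemma peval_sum: "peval (\<Sum>j\<in>S. f j) z = (\<Sum>j\<in>S. peval (f j) z)"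
  by (induction S rule: infinite_finite_induct) (auto simp: peval_add)

lemma pm_expand: "p = (\<Sum>\<alpha>\<in>ks p. sg \<alpha> (lk p \<alpha>))"
proof (rule poly_mapping_eqI)
  fix k
  have *: "finite I \<Longrightarrow> lk (\<Sum>\<alpha>\<in>I. sg \<alpha> (lk p \<alpha>)) k = (if k \<in> I then lk p k else 0)" for I
    by (induction I rule: finite_induct) (auto simp: lookup_single lookup_add when_def)
  show "lk p k = lk (\<Sum>\<alpha>\<in>ks p. sg \<alpha> (lk p \<alpha>)) k"
    by (simp add: * in_keys_iff)
qed

lemma mult_expand: "p * q = (\<Sum>\<alpha>\<in>ks p. \<Sum>\<beta>\<in>ks q. sg (\<alpha>+\<beta>) (lk p \<alpha> * lk q \<beta>))"
proof -
  have "p * q = (\<Sum>\<alpha>\<in>ks p. sg \<alpha> (lk p \<alpha>)) * (\<Sum>\<beta>\<in>ks q. sg \<beta> (lk q \<beta>))"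
    using pm_expand by metis
  also have "\<dots> = (\<Sum>\<alpha>\<in>ks p. \<Sum>\<beta>\<in>ks q. sg (\<alpha>+\<beta>) (lk p \<alpha> * lk q \<beta>))"
    by (simp add: sum_product mult_single)
  finally show ?thesis .
qed

lemma peval_mult: "peval (p * q) z = peval p z * peval q z"
proof -
  have "peval (p * q) z = (\<Sum>\<alpha>\<in>ks p. \<Sum>\<beta>\<in>ks q. (lk p \<alpha> * mv \<alpha> z) * (lk q \<beta> * mv \<beta> z))"
    by (simp add: mult_expand[of p q] peval_sum mv_add mult_ac)
  also have "\<dots> = peval p z * peval q z"
    by (simp add: peval_alt sum_product)
  finally show ?thesis .
qed

lemma peval_one[simp]: "peval 1 z = 1"
  by (simp add: peval_alt)

lemma peval_power: "peval (p ^ k) z = peval p z ^ k"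
  by (induction k) (auto simp: peval_mult)

lemma peval_prod: "peval (\<Prod>j\<in>S. f j) z = (\<Prod>j\<in>S. peval (f j) z)"
  by (induction S rule: infinite_finite_induct) (auto simp: peval_mult)

lemma peval_diff: "peval (p - q) z = peval p z - peval q z"
  by (metis add_diff_cancel_right' peval_add diff_add_cancel)

abbreviation bcl where "bcl \<equiv> bounded_clinear_op"

lemma scaleC_zero_right[simp]: "c *\<^sub>C (0::'h::complex_inner) = 0"
  by (metis add_cancel_right_right scaleC_add_right)

lemma scaleC_zero_left[simp]: "0 *\<^sub>C (x::'h::complex_inner) = 0"
  by (metis add_cancel_right_right add_0 scaleC_add_left)

lemma scaleC_sum_right: "c *\<^sub>C (\<Sum>i\<in>S. f i) = (\<Sum>i\<in>S. c *\<^sub>C (f i::'h::complex_inner))"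
  by (induction S rule: infinite_finite_induct) (auto simp: scaleC_add_right)

lemma scaleC_sum_left: "(\<Sum>i\<in>S. f i) *\<^sub>C x = (\<Sum>i\<in>S. (f i) *\<^sub>C (x::'h::complex_inner))"
  by (induction S rule: infinite_finite_induct) (auto simp: scaleC_add_left)

lemma cinner_scaleC_right: "cinner x (c *\<^sub>C y) = c * cinner x (y::'h::complex_inner)"
  by (metis cinner_commute cinner_scaleC_left complex_cnj_cnj complex_cnj_mult)

lemma norm_scaleC: "norm (c *\<^sub>C (x::'h::complex_inner)) = cmod c * norm x"
proof -
  have "complex_of_real ((norm (c *\<^sub>C x))\<^sup>2) = cnj c * c * complex_of_real ((norm x)\<^sup>2)"
    by (metis cinner_self_norm cinner_scaleC_left cinner_scaleC_right mult.assoc)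
  also have "cnj c * c = complex_of_real ((cmod c)\<^sup>2)"
    by (metis complex_norm_square mult.commute)
  finally have "(norm (c *\<^sub>C x))\<^sup>2 = ((cmod c) * norm x)\<^sup>2"
    by (metis of_real_eq_iff of_real_mult power_mult_distrib)
  then show ?thesis
    by (simp add: power2_eq_iff_nonneg)
qed

lemma bl_scaleC: "bounded_linear (\<lambda>x::'h::complex_inner. c *\<^sub>C x)"
proof (rule bounded_linear_intro[where K="cmod c"])
  show "c *\<^sub>C (x + y) = c *\<^sub>C x + c *\<^sub>C y" for x y :: 'h by (simp add: scaleC_add_right)
  show "c *\<^sub>C (r *\<^sub>R x) = r *\<^sub>R (c *\<^sub>C x)" for r and x :: 'h
  proof -
    have "c *\<^sub>C (r *\<^sub>R x) = c *\<^sub>C (complex_of_real r *\<^sub>C x)" by (simp add: scaleC_of_real)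
    also have "\<dots> = (complex_of_real r * c) *\<^sub>C x" by (simp add: scaleC_scaleC mult.commute)
    also have "\<dots> = complex_of_real r *\<^sub>C (c *\<^sub>C x)" by (simp add: scaleC_scaleC)
    also have "\<dots> = r *\<^sub>R (c *\<^sub>C x)" by (simp add: scaleC_of_real)
    finally show ?thesis .
  qed
  show "norm (c *\<^sub>C x) \<le> norm x * cmod c" for x :: 'h by (simp add: norm_scaleC mult.commute)
qed

lemma bcl_id: "bcl (id::'h::complex_inner \<Rightarrow> 'h)"
  by (simp add: bounded_clinear_op_def id_def)

lemma bcl_comp: "bcl f \<Longrightarrow> bcl g \<Longrightarrow> bcl (f \<circ> g)"
  unfolding bounded_clinear_op_def o_def by (auto intro: bounded_linear_compose)

lemma bcl_scale: "bcl f \<Longrightarrow> bcl (\<lambda>x. c *\<^sub>C f x)"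
  unfolding bounded_clinear_op_def
  by (auto intro: bounded_linear_compose[OF bl_scaleC] simp: scaleC_scaleC mult.commute)

lemma bcl_sum: "(\<And>i. i \<in> S \<Longrightarrow> bcl (f i)) \<Longrightarrow> bcl (\<lambda>x. \<Sum>i\<in>S. f i x)"
  unfolding bounded_clinear_op_def
  by (auto intro!: bounded_linear_sum simp: scaleC_sum_right)

lemma bcl_funpow: "bcl f \<Longrightarrow> bcl (f ^^ k)"
  by (induction k) (auto intro: bcl_comp bcl_id)

lemma bcl_add: "bcl f \<Longrightarrow> f (x + y) = f x + f y"
  unfolding bounded_clinear_op_def using linear_add bounded_linear.linear by blast

lemma bcl_scaleC: "bcl f \<Longrightarrow> f (c *\<^sub>C x) = c *\<^sub>C f x"
  unfolding bounded_clinear_op_def by blast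

lemma bcl_zero: "bcl f \<Longrightarrow> f 0 = 0"
  by (metis scaleC_zero_left bcl_scaleC)

lemma bcl_sum_app: "bcl f \<Longrightarrow> f (\<Sum>i\<in>S. g i) = (\<Sum>i\<in>S. f (g i))"
  by (induction S rule: infinite_finite_induct) (auto simp: bcl_add bcl_zero)

lemma funpow_commute_pt: "(\<And>x. f (g x) = g (f x)) \<Longrightarrow> (f ^^ k) (g x) = g ((f ^^ k) x)"
  by (induction k arbitrary: x) auto

definition lfold :: "(nat \<Rightarrow> 'h \<Rightarrow> 'h) \<Rightarrow> (nat \<Rightarrow>\<^sub>0 nat) \<Rightarrow> nat list \<Rightarrow> 'h \<Rightarrow> 'h" where
  "lfold T \<alpha> xs = foldr (\<lambda>i f. (T i ^^ lk \<alpha> i) \<circ> f) xs id"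

lemma lfold_Nil[simp]: "lfold T \<alpha> [] x = x" by (simp add: lfold_def)
lemma lfold_Cons[simp]: "lfold T \<alpha> (i # xs) x = (T i ^^ lk \<alpha> i) (lfold T \<alpha> xs x)" by (simp add: lfold_def)

lemma lfold_commute: "(\<And>j x. j \<in> set xs \<Longrightarrow> g (T j x) = T j (g x)) \<Longrightarrow> g (lfold T \<alpha> xs x) = lfold T \<alpha> xs (g x)"
proof (induction xs arbitrary: x)
  case Nil then show ?case by simp
next
  case (Cons i xs)
  have pi: "\<And>x. T i (g x) = g (T i x)" by (rule Cons.prems[symmetric]) simp
  have h: "g ((T i ^^ lk \<alpha> i) y) = (T i ^^ lk \<alpha> i) (g y)" for y
    using funpow_commute_pt[of "T i" g, OF pi] by simp
  have pr: "\<And>j x. j \<in> set xs \<Longrightarrow> g (T j x) = T j (g x)" by (rule Cons.prems) simp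
  have IH: "g (lfold T \<alpha> xs y) = lfold T \<alpha> xs (g y)" for y
    by (rule Cons.IH) (rule pr)
  show ?case by (simp only: lfold_Cons h IH)
qed

lemma lfold_add:
  assumes "\<And>i j x. i \<in> set xs \<Longrightarrow> j \<in> set xs \<Longrightarrow> T i (T j x) = T j (T i x)"
  shows "lfold T (\<alpha> + \<beta>) xs x = lfold T \<alpha> xs (lfold T \<beta> xs x)"
  using assms
proof (induction xs arbitrary: x)
  case Nil then show ?case by simp
next
  case (Cons i xs)
  have c: "(T i ^^ lk \<beta> i) (lfold T \<alpha> xs y) = lfold T \<alpha> xs ((T i ^^ lk \<beta> i) y)" for y
  proof (rule lfold_commute)
    fix j z assume "j \<in> set xs"
    then have "\<And>x. T i (T j x) = T j (T i x)" using Cons.prems by simp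
    then show "(T i ^^ lk \<beta> i) (T j z) = T j ((T i ^^ lk \<beta> i) z)"
      by (rule funpow_commute_pt)
  qed
  have "lfold T (\<alpha> + \<beta>) (i # xs) x = (T i ^^ lk \<alpha> i) ((T i ^^ lk \<beta> i) (lfold T \<alpha> xs (lfold T \<beta> xs x)))"
    using Cons by (simp add: lookup_add funpow_add)
  also have "\<dots> = lfold T \<alpha> (i # xs) (lfold T \<beta> (i # xs) x)"
    by (simp add: c)
  finally show ?case .
qed

lemma lfold_filter: "(\<And>i. i \<in> set xs \<Longrightarrow> \<not> P i \<Longrightarrow> lk \<alpha> i = 0) \<Longrightarrow> lfold T \<alpha> (filter P xs) = lfold T \<alpha> xs"
  by (induction xs) (auto simp: fun_eq_iff)

lemma mono_op_upt: "ks \<alpha> \<subseteq> {..<N} \<Longrightarrow> mono_op T \<alpha> = lfold T \<alpha> [0..<N]"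
proof -
  assume a: "ks \<alpha> \<subseteq> {..<N}"
  have e: "ks \<alpha> = set (filter (\<lambda>i. i \<in> ks \<alpha>) [0..<N])" using a by auto
  have "sorted_list_of_set (ks \<alpha>) = filter (\<lambda>i. i \<in> ks \<alpha>) [0..<N]"
    by (subst e, rule sorted_list_of_set.idem_if_sorted_distinct) (auto intro: sorted_wrt_filter)
  then have "mono_op T \<alpha> = lfold T \<alpha> (filter (\<lambda>i. i \<in> ks \<alpha>) [0..<N])"
    by (simp add: mono_op_def lfold_def)
  also have "\<dots> = lfold T \<alpha> [0..<N]"
    by (rule lfold_filter) (simp add: in_keys_iff)
  finally show ?thesis .
qed

lemma lfold_Cons': "lfold T \<alpha> (i # xs) = (T i ^^ lk \<alpha> i) \<circ> lfold T \<alpha> xs" by (simp add: fun_eq_iff)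
lemma lfold_Nil': "lfold T \<alpha> [] = id" by (simp add: fun_eq_iff)

lemma bcl_lfold: "(\<And>i. i \<in> set xs \<Longrightarrow> bcl (T i)) \<Longrightarrow> bcl (lfold T \<alpha> xs)"
  by (induction xs) (auto intro!: bcl_comp bcl_funpow simp: bcl_id lfold_Nil' lfold_Cons')

definition vars :: "nat \<Rightarrow> (nat \<Rightarrow>\<^sub>0 nat) set" where "vars n = {\<alpha>. ks \<alpha> \<subseteq> {..<n}}"

lemma vars_add: "\<alpha> \<in> vars n \<Longrightarrow> \<beta> \<in> vars n \<Longrightarrow> \<alpha> + \<beta> \<in> vars n"
  unfolding vars_def using keys_add[of \<alpha> \<beta>] by auto

lemma mono_op_add:
  assumes "commuting_tuple n T" "\<alpha> \<in> vars n" "\<beta> \<in> vars n"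
  shows "mono_op T (\<alpha> + \<beta>) x = mono_op T \<alpha> (mono_op T \<beta> x)"
proof -
  have c: "T i (T j x) = T j (T i x)" if "i \<in> set [0..<n]" "j \<in> set [0..<n]" for i j x
  proof -
    have "T i \<circ> T j = T j \<circ> T i" using assms(1) that unfolding commuting_tuple_def by simp
    from fun_cong[OF this, of x] show ?thesis by simp
  qed
  have "lfold T (\<alpha>+\<beta>) [0..<n] x = lfold T \<alpha> [0..<n] (lfold T \<beta> [0..<n] x)"
    by (rule lfold_add) (rule c)
  then show ?thesis
    using assms vars_add[OF assms(2,3)] unfolding vars_def
    by (simp add: mono_op_upt[where N=n])
qed

lemma bcl_mono_op: "commuting_tuple n T \<Longrightarrow> \<alpha> \<in> vars n \<Longrightarrow> bcl (mono_op T \<alpha>)"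
  unfolding vars_def commuting_tuple_def by (simp add: mono_op_upt[where N=n]) (intro bcl_lfold, auto)

lemma mono_op_zero[simp]: "mono_op T 0 = id"
  by (simp add: mono_op_def)

abbreviation pv where "pv n q \<equiv> poly_in_vars n q"

lemma pv_iff: "pv n q \<longleftrightarrow> ks q \<subseteq> vars n"
  by (auto simp: poly_in_vars_def vars_def)

lemma pv_add: "pv n p \<Longrightarrow> pv n q \<Longrightarrow> pv n (p + q)"
  unfolding pv_iff using keys_add[of p q] by auto

lemma keys_uminus': "ks (- p) = ks (p::(_ \<Rightarrow>\<^sub>0 complex))"
  by (auto simp: in_keys_iff)

lemma keys_diff': "ks (p - q) \<subseteq> ks p \<union> ks (q::(_ \<Rightarrow>\<^sub>0 complex))"
  by (auto simp: in_keys_iff lookup_minus)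

lemma pv_diff: "pv n p \<Longrightarrow> pv n q \<Longrightarrow> pv n (p - q)"
  unfolding pv_iff using keys_diff'[of p q] by auto

lemma pv_zero[simp]: "pv n 0" by (simp add: poly_in_vars_def)

lemma pv_sum: "(\<And>i. i \<in> S \<Longrightarrow> pv n (f i)) \<Longrightarrow> pv n (\<Sum>i\<in>S. f i)"
  by (induction S rule: infinite_finite_induct) (auto intro: pv_add)

lemma pv_single: "\<alpha> \<in> vars n \<Longrightarrow> pv n (sg \<alpha> c)"
  by (simp add: pv_iff)

lemma vars_zero[simp]: "0 \<in> vars n" by (simp add: vars_def)

lemma pv_one[simp]: "pv n 1" by (simp add: pv_iff)

lemma pv_mult: "pv n p \<Longrightarrow> pv n q \<Longrightarrow> pv n (p * q)"
proof -
  assume p: "pv n p" and q: "pv n q"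
  show ?thesis unfolding pv_iff
  proof
    fix \<gamma> assume "\<gamma> \<in> ks (p * q)"
    then obtain a b where "\<gamma> = a + b" "a \<in> ks p" "b \<in> ks q" using keys_mult[of p q] by auto
    then show "\<gamma> \<in> vars n" using p q by (auto simp: pv_iff intro!: vars_add)
  qed
qed

lemma pv_power: "pv n p \<Longrightarrow> pv n (p ^ k)"
  by (induction k) (auto intro: pv_mult)

lemma pv_prod: "(\<And>i. i \<in> S \<Longrightarrow> pv n (f i)) \<Longrightarrow> pv n (\<Prod>i\<in>S. f i)"
  by (induction S rule: infinite_finite_induct) (auto intro: pv_mult)

lemma opeval_superset: "finite K \<Longrightarrow> ks q \<subseteq> K \<Longrightarrow> opeval q T x = (\<Sum>\<alpha>\<in>K. lk q \<alpha> *\<^sub>C mono_op T \<alpha> x)"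
  unfolding opeval_def by (rule sum.mono_neutral_left) (auto simp: in_keys_iff)

lemma opeval_add: "opeval (p + q) T x = opeval p T x + opeval q T x"
proof -
  let ?K = "ks p \<union> ks q"
  have "opeval (p + q) T x = (\<Sum>\<alpha>\<in>?K. lk (p+q) \<alpha> *\<^sub>C mono_op T \<alpha> x)"
    by (rule opeval_superset) (auto simp: keys_add)
  also have "\<dots> = (\<Sum>\<alpha>\<in>?K. lk p \<alpha> *\<^sub>C mono_op T \<alpha> x) + (\<Sum>\<alpha>\<in>?K. lk q \<alpha> *\<^sub>C mono_op T \<alpha> x)"
    by (simp add: lookup_add scaleC_add_left sum.distrib)
  also have "\<dots> = opeval p T x + opeval q T x"
    by (simp add: opeval_superset[of "ks p \<union> ks q" p] opeval_superset[of "ks p \<union> ks q" q])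
  finally show ?thesis .
qed

lemma opeval_zero[simp]: "opeval 0 T x = 0" by (simp add: opeval_def)

lemma opeval_single[simp]: "opeval (sg \<alpha> c) T x = c *\<^sub>C mono_op T \<alpha> x"
  by (simp add: opeval_def)

lemma opeval_sum: "opeval (\<Sum>j\<in>S. f j) T x = (\<Sum>j\<in>S. opeval (f j) T x)"
  by (induction S rule: infinite_finite_induct) (auto simp: opeval_add)

lemma opeval_one[simp]: "opeval 1 T x = x"
  by (simp add: opeval_def scaleC_one)

lemma bcl_opeval: "commuting_tuple n T \<Longrightarrow> pv n q \<Longrightarrow> bcl (opeval q T)"
  unfolding opeval_def pv_iff
  by (intro bcl_sum bcl_scale bcl_mono_op) auto

lemma opeval_mult:
  assumes T: "commuting_tuple n T" and p: "pv n p" and q: "pv n q"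
  shows "opeval (p * q) T x = opeval p T (opeval q T x)"
proof -
  have pk: "\<alpha> \<in> vars n" if "\<alpha> \<in> ks p" for \<alpha> using p that by (auto simp: pv_iff)
  have qk: "\<beta> \<in> vars n" if "\<beta> \<in> ks q" for \<beta> using q that by (auto simp: pv_iff)
  have "opeval (p * q) T x = (\<Sum>\<alpha>\<in>ks p. \<Sum>\<beta>\<in>ks q. (lk p \<alpha> * lk q \<beta>) *\<^sub>C mono_op T (\<alpha> + \<beta>) x)"
    by (simp add: mult_expand[of p q] opeval_sum)
  also have "\<dots> = (\<Sum>\<alpha>\<in>ks p. \<Sum>\<beta>\<in>ks q. lk p \<alpha> *\<^sub>C mono_op T \<alpha> (lk q \<beta> *\<^sub>C mono_op T \<beta> x))"
  proof (intro sum.cong refl)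
    fix \<alpha> \<beta> assume a: "\<alpha> \<in> ks p" and b: "\<beta> \<in> ks q"
    have "mono_op T (\<alpha> + \<beta>) x = mono_op T \<alpha> (mono_op T \<beta> x)"
      by (rule mono_op_add[OF T pk[OF a] qk[OF b]])
    moreover have "mono_op T \<alpha> (lk q \<beta> *\<^sub>C y) = lk q \<beta> *\<^sub>C mono_op T \<alpha> y" for y
      by (rule bcl_scaleC[OF bcl_mono_op[OF T pk[OF a]]])
    ultimately show "(lk p \<alpha> * lk q \<beta>) *\<^sub>C mono_op T (\<alpha> + \<beta>) x = lk p \<alpha> *\<^sub>C mono_op T \<alpha> (lk q \<beta> *\<^sub>C mono_op T \<beta> x)"
      by (simp add: scaleC_scaleC)
  qed
  also have "\<dots> = (\<Sum>\<alpha>\<in>ks p. lk p \<alpha> *\<^sub>C mono_op T \<alpha> (\<Sum>\<beta>\<in>ks q. lk q \<beta> *\<^sub>C mono_op T \<beta> x))"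
  proof (intro sum.cong refl)
    fix \<alpha> assume a: "\<alpha> \<in> ks p"
    show "(\<Sum>\<beta>\<in>ks q. lk p \<alpha> *\<^sub>C mono_op T \<alpha> (lk q \<beta> *\<^sub>C mono_op T \<beta> x)) = lk p \<alpha> *\<^sub>C mono_op T \<alpha> (\<Sum>\<beta>\<in>ks q. lk q \<beta> *\<^sub>C mono_op T \<beta> x)"
      by (simp add: bcl_sum_app[OF bcl_mono_op[OF T pk[OF a]]] scaleC_sum_right)
  qed
  also have "\<dots> = opeval p T (opeval q T x)"
    by (simp add: opeval_def)
  finally show ?thesis .
qed

lemma opeval_power:
  assumes T: "commuting_tuple n T" and p: "pv n p"
  shows "opeval (p ^ k) T x = (opeval p T ^^ k) x"
proof (induction k arbitrary: x)
  case 0 then show ?case by simp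
next
  case (Suc k)
  have "opeval (p ^ Suc k) T x = opeval p T (opeval (p ^ k) T x)"
    by (simp add: opeval_mult[OF T p pv_power[OF p]])
  then show ?case using Suc by simp
qed

definition pcomp :: "cpoly \<Rightarrow> (nat \<Rightarrow> cpoly) \<Rightarrow> cpoly" where
  "pcomp f g = (\<Sum>\<alpha>\<in>ks f. sg 0 (lk f \<alpha>) * (\<Prod>k\<in>ks \<alpha>. g k ^ lk \<alpha> k))"

lemma peval_pcomp: "peval (pcomp f g) z = peval f (\<lambda>k. peval (g k) z)"
  by (simp add: pcomp_def peval_sum peval_mult peval_prod peval_power peval_alt[of f] mv_def)

lemma pv_pcomp: "pv n f \<Longrightarrow> (\<And>k. k < n \<Longrightarrow> pv n (g k)) \<Longrightarrow> pv n (pcomp f g)"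
  unfolding pcomp_def
  by (intro pv_sum pv_mult pv_single pv_prod pv_power) (auto simp: poly_in_vars_def)

lemma opeval_prod_list:
  assumes T: "commuting_tuple n T" and h: "\<And>k. k \<in> set xs \<Longrightarrow> pv n (h k)"
  shows "opeval (prod_list (map h xs)) T x = foldr (\<lambda>k f. opeval (h k) T \<circ> f) xs id x"
  using h
proof (induction xs arbitrary: x)
  case Nil then show ?case by simp
next
  case (Cons k xs)
  have pl: "pv n (prod_list (map h xs))"
    using Cons.prems by (induction xs) (auto intro: pv_mult)
  have "opeval (prod_list (map h (k # xs))) T x = opeval (h k) T (opeval (prod_list (map h xs)) T x)"
    using opeval_mult[OF T Cons.prems[of k] pl] by simp
  then show ?case using Cons by simp
qed

lemma opeval_pcomp:
  assumes T: "commuting_tuple n T" and f: "pv n f" and g: "\<And>k. k < n \<Longrightarrow> pv n (g k)"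
  shows "opeval (pcomp f g) T x = opeval f (\<lambda>k. opeval (g k) T) x"
proof -
  let ?S = "\<lambda>k. opeval (g k) T"
  have mono: "opeval (\<Prod>k\<in>ks \<alpha>. g k ^ lk \<alpha> k) T y = mono_op ?S \<alpha> y" if a: "\<alpha> \<in> ks f" for \<alpha> y
  proof -
    let ?xs = "sorted_list_of_set (ks \<alpha>)"
    have av: "ks \<alpha> \<subseteq> {..<n}" using f a by (auto simp: poly_in_vars_def)
    have "(\<Prod>k\<in>ks \<alpha>. g k ^ lk \<alpha> k) = prod_list (map (\<lambda>k. g k ^ lk \<alpha> k) ?xs)"
    proof -
      have "(\<Prod>k\<in>set ?xs. g k ^ lk \<alpha> k) = prod_list (map (\<lambda>k. g k ^ lk \<alpha> k) ?xs)"
        by (rule prod.distinct_set_conv_list) simp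
      then show ?thesis by simp
    qed
    then have "opeval (\<Prod>k\<in>ks \<alpha>. g k ^ lk \<alpha> k) T y = foldr (\<lambda>k f. opeval (g k ^ lk \<alpha> k) T \<circ> f) ?xs id y"
      using opeval_prod_list[OF T, of ?xs "\<lambda>k. g k ^ lk \<alpha> k"] av by (auto intro: pv_power g)
    also have "foldr (\<lambda>k f. opeval (g k ^ lk \<alpha> k) T \<circ> f) ?xs id = foldr (\<lambda>k f. (?S k ^^ lk \<alpha> k) \<circ> f) ?xs id"
    proof (intro foldr_cong refl)
      fix k f assume "k \<in> set ?xs"
      then have "k < n" using av by auto
      then show "opeval (g k ^ lk \<alpha> k) T \<circ> f = (?S k ^^ lk \<alpha> k) \<circ> f"
        using opeval_power[OF T g] by (auto simp: fun_eq_iff)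
    qed
    finally show ?thesis by (simp add: mono_op_def)
  qed
  have c: "opeval (sg 0 c * r) T y = c *\<^sub>C opeval r T y" if "pv n r" for c r y
    using opeval_mult[OF T pv_single[OF vars_zero] that] by simp
  have "opeval (pcomp f g) T x = (\<Sum>\<alpha>\<in>ks f. lk f \<alpha> *\<^sub>C opeval (\<Prod>k\<in>ks \<alpha>. g k ^ lk \<alpha> k) T x)"
    unfolding pcomp_def opeval_sum
  proof (intro sum.cong refl c)
    fix \<alpha> assume "\<alpha> \<in> ks f"
    then show "pv n (\<Prod>k\<in>ks \<alpha>. g k ^ lk \<alpha> k)"
      using f by (intro pv_prod pv_power g) (auto simp: poly_in_vars_def)
  qed
  also have "\<dots> = opeval f ?S x"
    unfolding opeval_def[of f] by (intro sum.cong refl) (simp add: mono)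
  finally show ?thesis .
qed

definition ksub :: "nat \<Rightarrow> nat \<Rightarrow> nat set set" where
  "ksub n k = {S. S \<subseteq> {..<n} \<and> card S = k}"

lemma finite_ksub[simp]: "finite (ksub n k)"
  unfolding ksub_def by (rule finite_subset[of _ "Pow {..<n}"]) auto

lemma theta_poly_lt: "k + 1 < n \<Longrightarrow> theta_poly m p n k = (\<Sum>S\<in>ksub n (k+1). sg (\<Sum>j\<in>S. sg j m) 1)"
  by (simp add: theta_poly_def ksub_def)

lemma theta_poly_eq: "k + 1 = n \<Longrightarrow> theta_poly m p n k = sg (\<Sum>j<n. sg j (m div p)) 1"
  by (simp add: theta_poly_def)

lemma theta_poly_gt: "\<not> k < n \<Longrightarrow> theta_poly m p n k = 0"
  by (simp add: theta_poly_def)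

lemma vars_sum_single: "S \<subseteq> {..<n} \<Longrightarrow> (\<Sum>j\<in>S. sg j (e j)) \<in> vars n"
proof -
  assume S: "S \<subseteq> {..<n}"
  have "finite S" using S finite_subset by blast
  then show ?thesis using S
  proof (induction S rule: finite_induct)
    case (insert x F)
    have "sg x (e x) \<in> vars n" using insert by (auto simp: vars_def)
    then show ?case using insert by (simp add: vars_add)
  qed simp
qed

lemma pv_theta: "pv n (theta_poly m p n k)"
proof -
  consider "k + 1 < n" | "k + 1 = n" | "\<not> k < n" by linarith
  then show ?thesis
  proof cases
    case 1 then show ?thesis unfolding theta_poly_lt[OF 1]
      by (intro pv_sum pv_single vars_sum_single) (auto simp: ksub_def)
  next
    case 2 then show ?thesis unfolding theta_poly_eq[OF 2]
      by (intro pv_sum pv_single vars_sum_single) auto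
  qed (simp add: theta_poly_gt)
qed

lemma peval_theta_lt: "k + 1 < n \<Longrightarrow> peval (theta_poly m p n k) z = (\<Sum>S\<in>ksub n (k+1). \<Prod>j\<in>S. z j ^ m)"
  by (simp add: theta_poly_lt peval_sum mv_sum)

lemma peval_theta_eq: "k + 1 = n \<Longrightarrow> peval (theta_poly m p n k) z = (\<Prod>j<n. z j ^ (m div p))"
  by (simp add: theta_poly_eq mv_sum)

lemma matvec_G:
  assumes "\<sigma> permutes {..<n}" "\<forall>i j. A i j = (if i < n \<and> j < n \<and> j = \<sigma> i then \<zeta> i else 0)"
  shows "matvec n A z i = (if i < n then \<zeta> i * z (\<sigma> i) else 0)"
proof -
  have s: "i < n \<Longrightarrow> \<sigma> i < n" using permutes_in_image[OF assms(1)] by auto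
  show ?thesis
  proof (cases "i < n")
    case True
    have "matvec n A z i = (\<Sum>j<n. if j = \<sigma> i then \<zeta> i * z j else 0)"
      unfolding matvec_def using assms(2) True by (intro sum.cong) auto
    also have "\<dots> = \<zeta> i * z (\<sigma> i)" using s[OF True] by (simp add: sum.delta)
    finally show ?thesis using True by simp
  qed (simp add: matvec_def assms(2))
qed

lemma ksub_image_perm:
  assumes "\<sigma> permutes {..<n}"
  shows "(\<lambda>S. \<sigma> ` S) ` ksub n k = ksub n k"
proof
  show "(\<lambda>S. \<sigma> ` S) ` ksub n k \<subseteq> ksub n k"
  proof
    fix T assume "T \<in> (\<lambda>S. \<sigma> ` S) ` ksub n k"
    then obtain S where S: "S \<in> ksub n k" "T = \<sigma> ` S" by auto
    have "\<sigma> ` S \<subseteq> {..<n}" using S permutes_in_image[OF assms] by (auto simp: ksub_def)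
    moreover have "card (\<sigma> ` S) = card S" by (rule card_image[OF permutes_inj_on[OF assms]])
    ultimately show "T \<in> ksub n k" using S by (auto simp: ksub_def)
  qed
next
  show "ksub n k \<subseteq> (\<lambda>S. \<sigma> ` S) ` ksub n k"
  proof
    fix T assume T: "T \<in> ksub n k"
    let ?S = "inv \<sigma> ` T"
    have e: "\<sigma> ` ?S = T" by (auto simp: image_image permutes_inverses[OF assms])
    have "?S \<subseteq> {..<n}"
    proof
      fix x assume "x \<in> ?S"
      then obtain y where "y \<in> T" "x = inv \<sigma> y" by auto
      then have "\<sigma> x \<in> {..<n}" using T by (auto simp: permutes_inverses[OF assms] ksub_def)
      then show "x \<in> {..<n}" using permutes_in_image[OF assms] by blast
    qed
    moreover have "card ?S = card T"
      using e card_image[OF permutes_inj_on[OF assms], of ?S] by simp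
    ultimately have "?S \<in> ksub n k" using T by (auto simp: ksub_def)
    then show "T \<in> (\<lambda>S. \<sigma> ` S) ` ksub n k" using e by (metis image_eqI)
  qed
qed

lemma theta_G_inv:
  assumes A: "A \<in> Gmpn m p n"
  shows "theta m p n (matvec n A z) = theta m p n z"
proof -
  obtain \<sigma> \<zeta> where \<sigma>: "\<sigma> permutes {..<n}" and Ad: "\<forall>i j. A i j = (if i < n \<and> j < n \<and> j = \<sigma> i then \<zeta> i else 0)"
    and zm: "\<forall>i<n. \<zeta> i ^ m = 1" and zp: "(\<Prod>i<n. \<zeta> i) ^ (m div p) = 1"
    using A unfolding Gmpn_def by blast
  have mv: "matvec n A z i = (if i < n then \<zeta> i * z (\<sigma> i) else 0)" for i
    by (rule matvec_G[OF \<sigma> Ad])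
  show ?thesis
  proof
    fix k
    consider "k + 1 < n" | "k + 1 = n" | "\<not> k < n" by linarith
    then show "theta m p n (matvec n A z) k = theta m p n z k"
    proof cases
      case 1
      have "(\<Sum>S\<in>ksub n (k+1). \<Prod>j\<in>S. matvec n A z j ^ m) = (\<Sum>S\<in>ksub n (k+1). \<Prod>j\<in>S. z (\<sigma> j) ^ m)"
      proof (intro sum.cong prod.cong refl)
        fix S j assume "S \<in> ksub n (k+1)" "j \<in> S"
        then have j: "j < n" by (auto simp: ksub_def)
        show "matvec n A z j ^ m = z (\<sigma> j) ^ m"
          using zm j by (simp add: mv power_mult_distrib)
      qed
      also have "\<dots> = (\<Sum>S\<in>ksub n (k+1). \<Prod>j\<in>\<sigma> ` S. z j ^ m)"
        by (intro sum.cong refl) (simp add: prod.reindex[OF permutes_inj_on[OF \<sigma>]])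
      also have "\<dots> = (\<Sum>S\<in>(\<lambda>S. \<sigma> ` S) ` ksub n (k+1). \<Prod>j\<in>S. z j ^ m)"
      proof (rule sum.reindex[symmetric, unfolded o_def])
        show "inj_on (\<lambda>S. \<sigma> ` S) (ksub n (k+1))"
          by (meson inj_image_eq_iff inj_onI permutes_inj[OF \<sigma>])
      qed
      also have "\<dots> = (\<Sum>S\<in>ksub n (k+1). \<Prod>j\<in>S. z j ^ m)"
        by (simp add: ksub_image_perm[OF \<sigma>])
      finally show ?thesis using 1 by (simp add: theta_def peval_theta_lt)
    next
      case 2
      have "(\<Prod>j<n. matvec n A z j ^ (m div p)) = (\<Prod>j<n. \<zeta> j ^ (m div p) * z (\<sigma> j) ^ (m div p))"
        by (intro prod.cong refl) (simp add: mv power_mult_distrib)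
      also have "\<dots> = (\<Prod>j<n. \<zeta> j) ^ (m div p) * (\<Prod>j<n. z (\<sigma> j) ^ (m div p))"
        by (simp add: prod.distrib prod_power_distrib)
      also have "\<dots> = (\<Prod>j<n. z (\<sigma> j) ^ (m div p))" using zp by simp
      also have "\<dots> = (\<Prod>j<n. z j ^ (m div p))"
        using prod.permute[OF \<sigma>, of "\<lambda>j. z j ^ (m div p)"] by (simp add: o_def)
      finally show ?thesis using 2 by (simp add: theta_def peval_theta_eq)
    qed (simp add: theta_def theta_poly_gt)
  qed
qed

lemma digits_bound: "(\<And>i. i < n \<Longrightarrow> f i < N) \<Longrightarrow> (\<Sum>i<n. f i * N ^ i) < (N::nat) ^ n"
proof (induction n)
  case 0 then show ?case by simp
next
  case (Suc n)
  have a: "(\<Sum>i<n. f i * N ^ i) < N ^ n" using Suc by simp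
  have b: "f n + 1 \<le> N" using Suc.prems[of n] by simp
  have "(\<Sum>i<Suc n. f i * N ^ i) = (\<Sum>i<n. f i * N ^ i) + f n * N ^ n" by simp
  also have "\<dots> < N ^ n + f n * N ^ n" using a by simp
  also have "\<dots> = (f n + 1) * N ^ n" by (simp add: algebra_simps)
  also have "\<dots> \<le> N * N ^ n" using b by (intro mult_right_mono) auto
  finally show ?case by simp
qed

lemma digits_inj:
  "(\<And>i. i < n \<Longrightarrow> f i < N) \<Longrightarrow> (\<And>i. i < n \<Longrightarrow> g i < N) \<Longrightarrow>
   (\<Sum>i<n. f i * N ^ i) = (\<Sum>i<n. g i * (N::nat) ^ i) \<Longrightarrow> i < n \<Longrightarrow> f i = g i"
proof (induction n arbitrary: i)
  case 0 then show ?case by simp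
next
  case (Suc n)
  let ?A = "\<Sum>i<n. f i * N ^ i" and ?B = "\<Sum>i<n. g i * N ^ i"
  have A: "?A < N ^ n" by (rule digits_bound) (simp add: Suc.prems)
  have B: "?B < N ^ n" by (rule digits_bound) (simp add: Suc.prems)
  have e: "?A + f n * N ^ n = ?B + g n * N ^ n" using Suc.prems(3) by simp
  have "(?A + f n * N ^ n) mod N ^ n = ?A" using A by simp
  moreover have "(?B + g n * N ^ n) mod N ^ n = ?B" using B by simp
  ultimately have AB: "?A = ?B" using e by simp
  then have fg: "f n = g n" using e
    by (metis add_left_cancel Suc.prems(1) lessI mult_cancel_right not_less_zero power_eq_0_iff)
  show ?case
  proof (cases "i < n")
    case True then show ?thesis using Suc.IH[of i] Suc.prems AB by simp
  next
    case False then have "i = n" using Suc.prems(4) by simp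
    then show ?thesis using fg by simp
  qed
qed

lemma identity_coeff:
  assumes K: "finite K" "K \<subseteq> vars n" and z: "\<And>z. (\<Sum>\<alpha>\<in>K. c \<alpha> * mv \<alpha> z) = 0" and b: "\<beta> \<in> K"
  shows "c \<beta> = 0"
proof -
  define N where "N = Suc (\<Sum>\<alpha>\<in>K. \<Sum>i<n. lk \<alpha> i)"
  have lt: "lk \<alpha> i < N" if "\<alpha> \<in> K" "i < n" for \<alpha> i
  proof -
    have "lk \<alpha> i \<le> (\<Sum>i<n. lk \<alpha> i)" using that by (intro member_le_sum) auto
    also have "\<dots> \<le> (\<Sum>\<alpha>\<in>K. \<Sum>i<n. lk \<alpha> i)" using that K by (intro member_le_sum) auto
    finally show ?thesis by (simp add: N_def)
  qed
  define enc where "enc \<alpha> = (\<Sum>i<n. lk \<alpha> i * N ^ i)" for \<alpha>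
  have mvt: "mv \<alpha> (\<lambda>i. t ^ (N ^ i)) = t ^ enc \<alpha>" if "\<alpha> \<in> K" for \<alpha> t
  proof -
    have "ks \<alpha> \<subseteq> {..<n}" using that K by (auto simp: vars_def)
    then have "mv \<alpha> (\<lambda>i. t ^ (N ^ i)) = (\<Prod>i<n. (t ^ (N ^ i)) ^ lk \<alpha> i)" by (simp add: mv_superset)
    also have "\<dots> = (\<Prod>i<n. t ^ (lk \<alpha> i * N ^ i))" by (simp add: power_mult[symmetric] mult.commute)
    also have "\<dots> = t ^ enc \<alpha>" by (simp add: enc_def power_sum)
    finally show ?thesis .
  qed
  have inj: "\<alpha> = \<gamma>" if "\<alpha> \<in> K" "\<gamma> \<in> K" "enc \<alpha> = enc \<gamma>" for \<alpha> \<gamma>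
  proof (rule poly_mapping_eqI)
    fix i
    show "lk \<alpha> i = lk \<gamma> i"
    proof (cases "i < n")
      case True
      show ?thesis
        by (rule digits_inj[of n "lk \<alpha>" N "lk \<gamma>"]) (use that True lt in \<open>auto simp: enc_def\<close>)
    next
      case False
      then have "i \<notin> ks \<alpha>" "i \<notin> ks \<gamma>" using that K by (auto simp: vars_def)
      then show ?thesis by (simp add: in_keys_iff)
    qed
  qed
  define P where "P = (\<Sum>\<alpha>\<in>K. Polynomial.monom (c \<alpha>) (enc \<alpha>))"
  have "poly P t = 0" for t
  proof -
    have "poly P t = (\<Sum>\<alpha>\<in>K. c \<alpha> * mv \<alpha> (\<lambda>i. t ^ (N ^ i)))"
      by (simp add: P_def poly_sum poly_monom mvt)
    then show ?thesis using z by simp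
  qed
  then have P0: "P = 0" using poly_all_0_iff_0 by blast
  have "Polynomial.coeff P (enc \<beta>) = (\<Sum>\<alpha>\<in>K. if \<alpha> = \<beta> then c \<alpha> else 0)"
    unfolding P_def coeff_sum
    by (intro sum.cong refl) (use inj b in auto)
  also have "\<dots> = c \<beta>" using K b by simp
  finally show ?thesis using P0 by simp
qed

definition omg :: "nat \<Rightarrow> complex" where "omg m = exp (2 * of_real pi * \<i> * of_nat 1 / of_nat m)"

lemma omg_pow: "omg m ^ k = exp (2 * of_real pi * \<i> * of_nat k / of_nat m)"
  unfolding omg_def exp_of_nat_mult[symmetric] by (simp add: field_simps)

lemma omg_pow_eq_1: "0 < m \<Longrightarrow> omg m ^ k = 1 \<longleftrightarrow> m dvd k"
  unfolding omg_pow by (rule complex_root_unity_eq_1) simp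

lemma poly_identity: "pv n r \<Longrightarrow> (\<And>z. peval r z = 0) \<Longrightarrow> r = 0"
proof -
  assume r: "pv n r" and z: "\<And>z. peval r z = 0"
  have "lk r \<alpha> = 0" if "\<alpha> \<in> ks r" for \<alpha>
    by (rule identity_coeff[of "ks r" n "lk r"]) (use r z that in \<open>auto simp: pv_iff peval_alt\<close>)
  then have "lk r \<alpha> = 0" for \<alpha> by (metis in_keys_iff)
  then show ?thesis by (intro poly_mapping_eqI) simp
qed

lemma peval_cong_vars: "pv n q \<Longrightarrow> (\<And>i. i < n \<Longrightarrow> z i = w i) \<Longrightarrow> peval q z = peval q w"
  unfolding peval_alt
  by (intro sum.cong refl arg_cong2[where f="(*)"] mv_cong) (auto simp: poly_in_vars_def)

lemma G_elem:
  assumes G: "G_invariant m p n q" and q: "pv n q" and \<sigma>: "\<sigma> permutes {..<n}"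
    and z1: "\<And>i. i < n \<Longrightarrow> \<zeta> i ^ m = 1" and z2: "(\<Prod>i<n. \<zeta> i) ^ (m div p) = 1"
  shows "peval q (\<lambda>i. \<zeta> i * z (\<sigma> i)) = peval q z"
proof -
  define A where "A = (\<lambda>i j. if i < n \<and> j < n \<and> j = \<sigma> i then \<zeta> i else (0::complex))"
  have AG: "A \<in> Gmpn m p n"
    unfolding Gmpn_def using \<sigma> z1 z2 by (auto simp: A_def)
  have "matvec n A z i = (if i < n then \<zeta> i * z (\<sigma> i) else 0)" for i
    by (rule matvec_G[OF \<sigma>]) (simp add: A_def)
  then have "peval q (matvec n A z) = peval q (\<lambda>i. \<zeta> i * z (\<sigma> i))"
    by (intro peval_cong_vars[OF q]) simp
  then show ?thesis using G AG unfolding G_invariant_def by metis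
qed

lemma diag_fact:
  assumes G: "G_invariant m p n q" and q: "pv n q"
    and z1: "\<And>i. i < n \<Longrightarrow> \<zeta> i ^ m = 1" and z2: "(\<Prod>i<n. \<zeta> i) ^ (m div p) = 1"
    and a: "\<alpha> \<in> ks q"
  shows "mv \<alpha> \<zeta> = 1"
proof -
  have e: "peval q (\<lambda>i. \<zeta> i * z i) = peval q z" for z
    using G_elem[OF G q permutes_id z1 z2] by simp
  have "(\<Sum>\<alpha>\<in>ks q. (lk q \<alpha> * (mv \<alpha> \<zeta> - 1)) * mv \<alpha> z) = 0" for z
  proof -
    have "(\<Sum>\<alpha>\<in>ks q. (lk q \<alpha> * (mv \<alpha> \<zeta> - 1)) * mv \<alpha> z) = peval q (\<lambda>i. \<zeta> i * z i) - peval q z"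
      by (simp add: peval_alt mv_mult_pt algebra_simps sum_subtractf)
    then show ?thesis using e by simp
  qed
  then have "lk q \<alpha> * (mv \<alpha> \<zeta> - 1) = 0"
    by (intro identity_coeff[of "ks q" n _ \<alpha>]) (use q a in \<open>auto simp: pv_iff\<close>)
  then show ?thesis using a by (simp add: in_keys_iff)
qed

lemma mv_omg: "\<alpha> \<in> vars n \<Longrightarrow> mv \<alpha> (\<lambda>j. omg m ^ e j) = omg m ^ (\<Sum>j<n. e j * lk \<alpha> j)"
proof -
  assume "\<alpha> \<in> vars n"
  then have "ks \<alpha> \<subseteq> {..<n}" by (simp add: vars_def)
  then have "mv \<alpha> (\<lambda>j. omg m ^ e j) = (\<Prod>j<n. (omg m ^ e j) ^ lk \<alpha> j)" by (simp add: mv_superset)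
  also have "\<dots> = omg m ^ (\<Sum>j<n. e j * lk \<alpha> j)" by (simp add: power_mult power_sum)
  finally show ?thesis .
qed

lemma prod_omg: "(\<Prod>j<n. omg m ^ e j) = omg m ^ (\<Sum>j<n. e j)"
  by (simp add: power_sum)

lemma mod_fact: "0 < (m::nat) \<Longrightarrow> m dvd a + (m - 1) * b \<Longrightarrow> a mod m = b mod m"
proof -
  assume m: "0 < m" and d: "m dvd a + (m - 1) * b"
  then obtain k where k: "a + (m - 1) * b = m * k" by (auto simp: dvd_def)
  have "a + m * b = m * k + b" using k m by (cases m) (auto simp: algebra_simps)
  then have "(a + m * b) mod m = (m * k + b) mod m" by simp
  then show ?thesis by simp
qed

lemma GA:
  assumes m: "0 < m" and G: "G_invariant m p n q" and q: "pv n q" and a: "\<alpha> \<in> ks q" and i: "i < n"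
  shows "lk \<alpha> i mod m = lk \<alpha> 0 mod m"
proof (cases "i = 0")
  case False
  have n0: "0 < n" using i by simp
  define e where "e j = (if j = i then 1 else 0) + (if j = 0 then m - 1 else 0)" for j :: nat
  have av: "\<alpha> \<in> vars n" using q a by (auto simp: pv_iff)
  have pt: "e j * lk \<alpha> j = (if j = i then lk \<alpha> j else 0) + (if j = 0 then (m - 1) * lk \<alpha> j else 0)" for j
    using False by (auto simp: e_def)
  have s1: "(\<Sum>j<n. e j * lk \<alpha> j) = lk \<alpha> i + (m - 1) * lk \<alpha> 0"
    using i n0 by (simp only: pt sum.distrib) simp
  have s2: "(\<Sum>j<n. e j) = m"
    using i n0 m by (simp add: e_def sum.distrib)
  have "mv \<alpha> (\<lambda>j. omg m ^ e j) = 1"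
  proof (rule diag_fact[OF G q _ _ a])
    show "(omg m ^ e j) ^ m = 1" for j
      using m by (simp add: power_mult[symmetric] omg_pow_eq_1)
    have "omg m ^ m = 1" using omg_pow_eq_1[OF m, of m] by simp
    then show "(\<Prod>j<n. omg m ^ e j) ^ (m div p) = 1"
      by (simp add: prod_omg s2)
  qed
  then have "m dvd lk \<alpha> i + (m - 1) * lk \<alpha> 0"
    using m by (simp add: mv_omg[OF av] s1 omg_pow_eq_1)
  then show ?thesis by (rule mod_fact[OF m])
qed simp

lemma GB:
  assumes m: "0 < m" and p: "0 < p" "p dvd m" and G: "G_invariant m p n q" and q: "pv n q" and a: "\<alpha> \<in> ks q" and n0: "0 < n"
  shows "(m div p) dvd lk \<alpha> 0"
proof -
  define e where "e j = (if j = 0 then p else 0)" for j :: nat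
  have av: "\<alpha> \<in> vars n" using q a by (auto simp: pv_iff)
  have s1: "(\<Sum>j<n. e j * lk \<alpha> j) = p * lk \<alpha> 0"
    using n0 by (simp add: e_def if_distrib[where f="\<lambda>x. x * _"] cong: if_cong)
  have s2: "(\<Sum>j<n. e j) = p"
    using n0 by (simp add: e_def)
  have mp: "p * (m div p) = m" using p by simp
  have "mv \<alpha> (\<lambda>j. omg m ^ e j) = 1"
  proof (rule diag_fact[OF G q _ _ a])
    show "(omg m ^ e j) ^ m = 1" for j
      using m by (simp add: power_mult[symmetric] omg_pow_eq_1)
    show "(\<Prod>j<n. omg m ^ e j) ^ (m div p) = 1"
      using m by (simp add: prod_omg s2 power_mult[symmetric] mp omg_pow_eq_1)
  qed
  then have "m dvd p * lk \<alpha> 0"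
    using m by (simp add: mv_omg[OF av] s1 omg_pow_eq_1)
  then have "p * (m div p) dvd p * lk \<alpha> 0" using mp by simp
  then show ?thesis using nat_mult_dvd_cancel1[OF p(1)] by blast
qed

lemma less_pm_iff: "(a::nat \<Rightarrow>\<^sub>0 nat) < b \<longleftrightarrow> less_fun (lk a) (lk b)"
  by (simp add: less_poly_mapping.rep_eq)

definition pm :: "(nat \<Rightarrow> nat) \<Rightarrow> (nat \<Rightarrow>\<^sub>0 nat) \<Rightarrow> (nat \<Rightarrow>\<^sub>0 nat)" where
  "pm \<sigma> \<alpha> = Abs_poly_mapping (\<lambda>j. lk \<alpha> (\<sigma> j))"

lemma lk_pm: "inj \<sigma> \<Longrightarrow> lk (pm \<sigma> \<alpha>) j = lk \<alpha> (\<sigma> j)"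
proof -
  assume "inj \<sigma>"
  then have "finite {j. lk \<alpha> (\<sigma> j) \<noteq> 0}"
    using finite_vimageI[OF finite_keys[of \<alpha>], of \<sigma>] by (simp add: vimage_def in_keys_iff)
  then show ?thesis by (simp add: pm_def)
qed

lemma transpose_invol: "Transposition.transpose i j (Transposition.transpose i j x) = x"
  by (simp add: Transposition.transpose_def)

lemma inj_transpose': "inj (Transposition.transpose i j)"
  by (metis injI transpose_invol)

lemma pm_invol: "pm (Transposition.transpose i j) (pm (Transposition.transpose i j) \<alpha>) = \<alpha>"
  by (rule poly_mapping_eqI) (simp add: lk_pm inj_transpose' transpose_invol)

lemma pm_vars:
  assumes ij: "i < n" "j < n" and a: "\<alpha> \<in> vars n"
  shows "pm (Transposition.transpose i j) \<alpha> \<in> vars n"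
proof -
  have "k < n" if k: "k \<in> ks (pm (Transposition.transpose i j) \<alpha>)" for k
  proof (rule ccontr)
    assume "\<not> k < n"
    then have "Transposition.transpose i j k = k" "k \<notin> ks \<alpha>" using ij a by (auto simp: vars_def)
    then show False using k by (simp add: lk_pm inj_transpose' in_keys_iff)
  qed
  then show ?thesis by (auto simp: vars_def)
qed

lemma mv_pm:
  assumes ij: "i < n" "j < n" and a: "\<alpha> \<in> vars n"
  shows "mv (pm (Transposition.transpose i j) \<alpha>) z = mv \<alpha> (\<lambda>k. z (Transposition.transpose i j k))"
proof -
  let ?t = "Transposition.transpose i j"
  have t: "?t permutes {..<n}" by (rule permutes_swap_id) (use ij in auto)
  have "mv (pm ?t \<alpha>) z = (\<Prod>k<n. z k ^ lk \<alpha> (?t k))"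
  proof -
    have "ks (pm ?t \<alpha>) \<subseteq> {..<n}" using pm_vars[OF ij a] by (simp add: vars_def)
    then show ?thesis by (simp add: mv_superset[OF finite_lessThan] lk_pm inj_transpose')
  qed
  also have "\<dots> = (\<Prod>k<n. z (?t k) ^ lk \<alpha> k)"
    using prod.permute[OF t, of "\<lambda>k. z (?t k) ^ lk \<alpha> k"] by (simp add: o_def transpose_invol)
  also have "\<dots> = mv \<alpha> (\<lambda>k. z (?t k))"
    using a by (simp add: mv_superset[OF finite_lessThan] vars_def)
  finally show ?thesis .
qed

lemma perm_fact:
  assumes G: "G_invariant m p n q" and q: "pv n q" and ij: "i < n" "j < n" and b: "\<beta> \<in> ks q"
  shows "lk q (pm (Transposition.transpose i j) \<beta>) = lk q \<beta>"
proof -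
  let ?t = "Transposition.transpose i j"
  have t: "?t permutes {..<n}" by (rule permutes_swap_id) (use ij in auto)
  define qt where "qt = (\<Sum>\<alpha>\<in>ks q. sg (pm ?t \<alpha>) (lk q \<alpha>))"
  have kv: "\<alpha> \<in> vars n" if "\<alpha> \<in> ks q" for \<alpha> using q that by (auto simp: pv_iff)
  have pqt: "pv n qt" unfolding qt_def by (intro pv_sum pv_single pm_vars ij kv)
  have "peval qt z = peval q z" for z
  proof -
    have "peval qt z = (\<Sum>\<alpha>\<in>ks q. lk q \<alpha> * mv \<alpha> (\<lambda>k. 1 * z (?t k)))"
      unfolding qt_def peval_sum by (intro sum.cong refl) (simp add: mv_pm[OF ij kv])
    also have "\<dots> = peval q (\<lambda>k. 1 * z (?t k))" by (simp add: peval_alt)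
    also have "\<dots> = peval q z" by (rule G_elem[OF G q t]) auto
    finally show ?thesis .
  qed
  then have "qt - q = 0" by (intro poly_identity[of n]) (auto simp: pv_diff[OF pqt q] peval_diff)
  then have "qt = q" by simp
  moreover have "lk qt (pm ?t \<beta>) = lk q \<beta>"
  proof -
    have "lk qt (pm ?t \<beta>) = (\<Sum>\<alpha>\<in>ks q. if \<alpha> = \<beta> then lk q \<alpha> else 0)"
      unfolding qt_def lookup_sum
      by (intro sum.cong refl) (auto simp: lookup_single when_def dest: arg_cong[where f="pm ?t"] simp: pm_invol)
    also have "\<dots> = lk q \<beta>" using b by simp
    finally show ?thesis .
  qed
  ultimately show ?thesis by simp
qed

lemma top_sorted:
  assumes G: "G_invariant m p n q" and q: "pv n q" and a: "\<alpha> \<in> ks q" and top: "\<And>\<beta>. \<beta> \<in> ks q \<Longrightarrow> \<beta> \<le> \<alpha>"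
    and i: "Suc i < n"
  shows "lk \<alpha> (Suc i) \<le> lk \<alpha> i"
proof (rule ccontr)
  assume c: "\<not> lk \<alpha> (Suc i) \<le> lk \<alpha> i"
  let ?t = "Transposition.transpose i (Suc i)"
  let ?b = "pm ?t \<alpha>"
  have "lk q ?b = lk q \<alpha>" by (rule perm_fact[OF G q _ i a]) (use i in auto)
  then have "?b \<in> ks q" using a by (simp add: in_keys_iff)
  then have le: "?b \<le> \<alpha>" by (rule top)
  have "\<alpha> < ?b" unfolding less_pm_iff less_fun_def
  proof (intro exI conjI allI impI)
    show "lk \<alpha> i < lk ?b i" using c by (simp add: lk_pm inj_transpose')
    fix k assume "k < i"
    then show "lk \<alpha> k = lk ?b k" by (simp add: lk_pm inj_transpose' Transposition.transpose_def)
  qed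
  then show False using le by simp
qed

definition hasTop :: "cpoly \<Rightarrow> (nat \<Rightarrow>\<^sub>0 nat) \<Rightarrow> complex \<Rightarrow> bool" where
  "hasTop P a c \<longleftrightarrow> lk P a = c \<and> (\<forall>b\<in>ks P. b \<le> a)"

lemma lk_zero_if_less: fixes X :: cpoly shows "(\<And>b. b \<in> ks X \<Longrightarrow> b < a) \<Longrightarrow> lk X a = 0"
proof (rule ccontr)
  assume h: "\<And>b. b \<in> ks X \<Longrightarrow> b < a" and "lk X a \<noteq> 0"
  then have "a \<in> ks X" by (simp add: in_keys_iff)
  then have "a < a" by (rule h)
  then show False by simp
qed

lemma keys_mult_less:
  fixes X Y :: cpoly
  assumes "\<And>x. x \<in> ks X \<Longrightarrow> x < a" "\<And>y. y \<in> ks Y \<Longrightarrow> y \<le> b"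
  shows "\<And>z. z \<in> ks (X * Y) \<Longrightarrow> z < a + b"
proof -
  fix z assume "z \<in> ks (X * Y)"
  then obtain x y where xy: "z = x + y" "x \<in> ks X" "y \<in> ks Y" using keys_mult[of X Y] by auto
  show "z < a + b" unfolding xy(1) by (rule add_less_le_mono[OF assms(1)[OF xy(2)] assms(2)[OF xy(3)]])
qed

lemma keys_mult_less':
  fixes X Y :: cpoly
  assumes "\<And>x. x \<in> ks X \<Longrightarrow> x \<le> a" "\<And>y. y \<in> ks Y \<Longrightarrow> y < b"
  shows "\<And>z. z \<in> ks (X * Y) \<Longrightarrow> z < a + b"
proof -
  fix z assume "z \<in> ks (X * Y)"
  then obtain x y where xy: "z = x + y" "x \<in> ks X" "y \<in> ks Y" using keys_mult[of X Y] by auto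
  show "z < a + b" unfolding xy(1) by (rule add_le_less_mono[OF assms(1)[OF xy(2)] assms(2)[OF xy(3)]])
qed

lemma rest_less: "hasTop P a c \<Longrightarrow> x \<in> ks (P - sg a c) \<Longrightarrow> x < a"
proof -
  assume h: "hasTop P a c" and x: "x \<in> ks (P - sg a c)"
  show "x < a"
  proof (cases "x = a")
    case True
    then show ?thesis using h x by (simp add: hasTop_def in_keys_iff lookup_minus)
  next
    case False
    then have "x \<in> ks P" using x by (simp add: in_keys_iff lookup_minus lookup_single)
    then show ?thesis using h False by (auto simp: hasTop_def)
  qed
qed

lemma hasTop_mult:
  assumes P: "hasTop P a c" and Q: "hasTop Q b d"
  shows "hasTop (P * Q) (a + b) (c * d)"
proof -
  have kP: "x \<le> a" if "x \<in> ks P" for x using P that by (auto simp: hasTop_def)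
  have kQ: "y \<le> b" if "y \<in> ks Q" for y using Q that by (auto simp: hasTop_def)
  have keys: "z \<le> a + b" if z: "z \<in> ks (P * Q)" for z
  proof -
    obtain x y where xy: "z = x + y" "x \<in> ks P" "y \<in> ks Q" using z keys_mult[of P Q] by auto
    show ?thesis unfolding xy(1) by (rule add_mono[OF kP[OF xy(2)] kQ[OF xy(3)]])
  qed
  let ?P' = "P - sg a c" and ?Q' = "Q - sg b d"
  have e: "P * Q = sg a c * sg b d + sg a c * ?Q' + ?P' * Q"
    by (simp add: algebra_simps)
  have l1: "lk (sg a c * ?Q') (a + b) = 0"
  proof (rule lk_zero_if_less)
    fix z assume z: "z \<in> ks (sg a c * ?Q')"
    have A: "\<And>x. x \<in> ks (sg a c) \<Longrightarrow> x \<le> a" by (simp split: if_splits)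
    have B: "\<And>y. y \<in> ks ?Q' \<Longrightarrow> y < b" by (rule rest_less[OF Q])
    show "z < a + b" by (rule keys_mult_less'[OF A B z])
  qed
  have l2: "lk (?P' * Q) (a + b) = 0"
  proof (rule lk_zero_if_less)
    fix z assume z: "z \<in> ks (?P' * Q)"
    have A: "\<And>x. x \<in> ks ?P' \<Longrightarrow> x < a" by (rule rest_less[OF P])
    show "z < a + b" by (rule keys_mult_less[OF A kQ z])
  qed
  have "lk (P * Q) (a + b) = c * d"
    by (simp add: e lookup_add l1 l2 mult_single)
  then show ?thesis using keys by (simp add: hasTop_def)
qed

lemma hasTop_one: "hasTop 1 0 1"
  by (simp add: hasTop_def)

definition smul :: "nat \<Rightarrow> (nat \<Rightarrow>\<^sub>0 nat) \<Rightarrow> (nat \<Rightarrow>\<^sub>0 nat)" where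
  "smul k a = Abs_poly_mapping (\<lambda>i. k * lk a i)"

lemma lk_smul: "lk (smul k a) i = k * lk a i"
proof -
  have "finite {i. k * lk a i \<noteq> 0}"
    by (rule finite_subset[of _ "ks a"]) (auto simp: in_keys_iff)
  then show ?thesis by (simp add: smul_def)
qed

lemma smul_Suc: "smul (Suc k) a = a + smul k a"
  by (rule poly_mapping_eqI) (simp add: lk_smul lookup_add)

lemma smul_0: "smul 0 a = 0"
  by (rule poly_mapping_eqI) (simp add: lk_smul)

lemma hasTop_power: "hasTop P a c \<Longrightarrow> hasTop (P ^ k) (smul k a) (c ^ k)"
proof (induction k)
  case 0 then show ?case by (simp add: smul_0 hasTop_one)
next
  case (Suc k)
  then show ?case using hasTop_mult[OF Suc.prems Suc.IH[OF Suc.prems]] by (simp add: smul_Suc)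
qed

lemma hasTop_prod: "finite K \<Longrightarrow> (\<And>k. k \<in> K \<Longrightarrow> hasTop (P k) (a k) (c k)) \<Longrightarrow>
   hasTop (\<Prod>k\<in>K. P k) (\<Sum>k\<in>K. a k) (\<Prod>k\<in>K. c k)"
proof (induction K rule: finite_induct)
  case empty then show ?case by (simp add: hasTop_one)
next
  case (insert x F)
  then show ?case using hasTop_mult[of "P x" "a x" "c x"] by simp
qed

lemma lk_sum_single: "finite S \<Longrightarrow> lk (\<Sum>j\<in>S. sg j e) i = (if i \<in> S then e else 0)"
  by (simp add: lookup_sum lookup_single when_def)

lemma ind_less:
  fixes m :: nat
  assumes m: "0 < m" and S: "finite S" and c: "card S = k" and ne: "S \<noteq> {..<k}"
  shows "(\<Sum>j\<in>S. sg j m) < (\<Sum>j\<in>{..<k}. sg j m)"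
proof -
  let ?K = "{..<k}"
  have "\<not> ?K \<subseteq> S"
  proof
    assume "?K \<subseteq> S"
    then have "?K = S" using card_subset_eq[OF S] c by simp
    then show False using ne by simp
  qed
  then obtain x where x: "x \<in> ?K" "x \<notin> S" by auto
  define t where "t = (LEAST x. x \<in> ?K \<and> x \<notin> S)"
  have t: "t \<in> ?K" "t \<notin> S" using LeastI[of "\<lambda>x. x \<in> ?K \<and> x \<notin> S", OF conjI[OF x]] by (auto simp: t_def)
  have below: "t' \<in> S" if "t' < t" for t'
  proof (rule ccontr)
    assume "t' \<notin> S"
    moreover have "t' \<in> ?K" using that t by auto
    ultimately have "t \<le> t'" unfolding t_def by (intro Least_le) auto
    then show False using that by simp
  qed
  show ?thesis unfolding less_pm_iff less_fun_def
  proof (intro exI conjI allI impI)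
    show "lk (\<Sum>j\<in>S. sg j m) t < lk (\<Sum>j\<in>?K. sg j m) t"
      using t m S by (simp add: lk_sum_single)
    fix t' assume "t' < t"
    then show "lk (\<Sum>j\<in>S. sg j m) t' = lk (\<Sum>j\<in>?K. sg j m) t'"
      using below t S by (simp add: lk_sum_single)
  qed
qed

lemma ind_inj: "0 < m \<Longrightarrow> finite S \<Longrightarrow> finite S' \<Longrightarrow> (\<Sum>j\<in>S. sg j m) = (\<Sum>j\<in>S'. sg j (m::nat)) \<Longrightarrow> S = S'"
proof -
  assume m: "0 < m" and f: "finite S" "finite S'" and e: "(\<Sum>j\<in>S. sg j m) = (\<Sum>j\<in>S'. sg j m)"
  have "i \<in> S \<longleftrightarrow> i \<in> S'" for i
    using arg_cong[OF e, of "\<lambda>x. lk x i"] m f by (simp add: lk_sum_single split: if_splits)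
  then show ?thesis by auto
qed

lemma hasTop_theta_lt:
  assumes m: "0 < m" and k: "k + 1 < n"
  shows "hasTop (theta_poly m p n k) (\<Sum>j\<in>{..<k+1}. sg j m) 1"
proof -
  let ?K = "{..<k+1}"
  have fin: "finite S" if "S \<in> ksub n (k+1)" for S using that finite_subset by (auto simp: ksub_def)
  have Kin: "?K \<in> ksub n (k+1)" using k by (auto simp: ksub_def)
  have iff: "((\<Sum>j\<in>S. sg j m) = (\<Sum>j\<in>?K. sg j m)) \<longleftrightarrow> S = ?K" if "S \<in> ksub n (k+1)" for S
  proof
    assume e: "(\<Sum>j\<in>S. sg j m) = (\<Sum>j\<in>?K. sg j m)"
    show "S = ?K" by (rule ind_inj[OF m fin[OF that] finite_lessThan e])
  qed simp
  have "lk (theta_poly m p n k) (\<Sum>j\<in>?K. sg j m) = (\<Sum>S\<in>ksub n (k+1). if S = ?K then 1 else 0)"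
    unfolding theta_poly_lt[OF k] lookup_sum
  proof (intro sum.cong refl)
    fix S assume S: "S \<in> ksub n (k+1)"
    show "lk (sg (\<Sum>j\<in>S. sg j m) 1) (\<Sum>j\<in>?K. sg j m) = (if S = ?K then 1 else 0)"
      unfolding lookup_single when_def iff[OF S] by (rule refl)
  qed
  also have "\<dots> = 1" using Kin by simp
  finally have l: "lk (theta_poly m p n k) (\<Sum>j\<in>?K. sg j m) = 1" .
  have "b \<le> (\<Sum>j\<in>?K. sg j m)" if bk: "b \<in> ks (theta_poly m p n k)" for b
  proof -
    obtain S where S: "S \<in> ksub n (k+1)" "b \<in> ks (sg (\<Sum>j\<in>S. sg j m) (1::complex))"
    proof -
      have "b \<in> (\<Union>S\<in>ksub n (k+1). ks (sg (\<Sum>j\<in>S. sg j m) (1::complex)))"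
        using subsetD[OF keys_sum bk[unfolded theta_poly_lt[OF k]]] .
      then show ?thesis using that by auto
    qed
    then have b: "b = (\<Sum>j\<in>S. sg j m)" by simp
    show ?thesis
    proof (cases "S = ?K")
      case False
      then show ?thesis using ind_less[OF m fin[OF S(1)], of "k+1"] S(1) b by (auto simp: ksub_def)
    qed (simp add: b)
  qed
  then show ?thesis using l by (simp add: hasTop_def)
qed

lemma hasTop_theta_eq:
  assumes k: "k + 1 = n"
  shows "hasTop (theta_poly m p n k) (\<Sum>j<n. sg j (m div p)) 1"
  by (simp add: theta_poly_eq[OF k] hasTop_def)

definition Pr :: "(nat \<Rightarrow> cpoly) \<Rightarrow> (nat \<Rightarrow>\<^sub>0 nat) \<Rightarrow> cpoly" where
  "Pr g \<alpha> = (\<Prod>k\<in>ks \<alpha>. g k ^ lk \<alpha> k)"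

lemma pcomp_Pr: "pcomp f g = (\<Sum>\<alpha>\<in>ks f. sg 0 (lk f \<alpha>) * Pr g \<alpha>)"
  by (simp add: pcomp_def Pr_def)

lemma pcomp_superset: "finite K \<Longrightarrow> ks f \<subseteq> K \<Longrightarrow> pcomp f g = (\<Sum>\<alpha>\<in>K. sg 0 (lk f \<alpha>) * Pr g \<alpha>)"
  unfolding pcomp_Pr by (rule sum.mono_neutral_left) (auto simp: in_keys_iff)

lemma pcomp_add: "pcomp (f + h) g = pcomp f g + pcomp h g"
proof -
  let ?K = "ks f \<union> ks h"
  have "pcomp (f + h) g = (\<Sum>\<alpha>\<in>?K. sg 0 (lk (f + h) \<alpha>) * Pr g \<alpha>)"
    by (rule pcomp_superset) (auto simp: keys_add)
  also have "\<dots> = (\<Sum>\<alpha>\<in>?K. sg 0 (lk f \<alpha>) * Pr g \<alpha>) + (\<Sum>\<alpha>\<in>?K. sg 0 (lk h \<alpha>) * Pr g \<alpha>)"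
    by (simp add: lookup_add single_add distrib_right sum.distrib)
  also have "\<dots> = pcomp f g + pcomp h g"
    by (simp add: pcomp_superset[of ?K f] pcomp_superset[of ?K h])
  finally show ?thesis .
qed

lemma pcomp_zero[simp]: "pcomp 0 g = 0" by (simp add: pcomp_def)

lemma pcomp_single: "pcomp (sg \<gamma> c) g = sg 0 c * Pr g \<gamma>"
  by (subst pcomp_superset[of "{\<gamma>}"]) auto

lemma lk_scale: "lk (sg 0 c * M) x = c * lk (M::cpoly) x"
  unfolding mult_map_scale_conv_mult[symmetric] by (simp add: map.rep_eq when_def)

lemma ginv_pcomp: "G_invariant m p n (pcomp f (theta_poly m p n))"
  by (simp add: G_invariant_def peval_pcomp theta_def[symmetric] theta_G_inv)

lemma ginv_diff: "G_invariant m p n q \<Longrightarrow> G_invariant m p n r \<Longrightarrow> G_invariant m p n (q - r)"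
  by (simp add: G_invariant_def peval_diff)

lemma wfR: "wf {(x, y). x \<in> vars n \<and> y \<in> vars n \<and> (x::nat \<Rightarrow>\<^sub>0 nat) < y}"
proof (rule wf_subset)
  let ?L = "\<lambda>x::nat \<Rightarrow>\<^sub>0 nat. map (lk x) [0..<n]"
  show "wf (inv_image (lexn less_than n) ?L)" by (intro wf_inv_image wf_lexn wf_less_than)
  show "{(x, y). x \<in> vars n \<and> y \<in> vars n \<and> x < y} \<subseteq> inv_image (lexn less_than n) ?L"
  proof safe
    fix x y :: "nat \<Rightarrow>\<^sub>0 nat" assume x: "x \<in> vars n" and y: "y \<in> vars n" and xy: "x < y"
    obtain k where k: "lk x k < lk y k" "\<And>k'. k' < k \<Longrightarrow> lk x k' = lk y k'"
      using xy unfolding less_pm_iff less_fun_def by blast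
    have kn: "k < n"
    proof (rule ccontr)
      assume "\<not> k < n"
      then have "k \<notin> ks y" using y by (auto simp: vars_def)
      then show False using k(1) by (simp add: in_keys_iff)
    qed
    have "[0..<n] = [0..<k] @ [k..<n]" using upt_add_eq_append[of 0 k "n-k"] kn by simp
    then have split: "[0..<n] = [0..<k] @ k # [Suc k..<n]" using kn by (simp add: upt_conv_Cons)
    have pre: "map (lk x) [0..<k] = map (lk y) [0..<k]" using k(2) by simp
    have Lx: "?L x = map (lk x) [0..<k] @ lk x k # map (lk x) [Suc k..<n]" by (simp add: split)
    have Ly: "?L y = map (lk x) [0..<k] @ lk y k # map (lk y) [Suc k..<n]" by (simp add: split pre)
    have "length (?L x) = n \<and> length (?L y) = n \<and> (\<exists>xys a b xs' ys'. ?L x = xys @ a # xs' \<and> ?L y = xys @ b # ys' \<and> (a, b) \<in> less_than)"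
      using Lx Ly k(1) kn by auto
    then show "(x, y) \<in> inv_image (lexn less_than n) ?L"
      unfolding inv_image_def lexn_conv by blast
  qed
qed

lemma telescope:
  "(\<And>k. i \<le> k \<Longrightarrow> k < N \<Longrightarrow> f (Suc k) \<le> f k) \<Longrightarrow> i \<le> N \<Longrightarrow>
   (\<Sum>k\<in>{i..<N}. f k - f (Suc k)) = f i - f N \<and> f N \<le> (f i::nat)"
proof (induction N)
  case 0 then show ?case by simp
next
  case (Suc N)
  show ?case
  proof (cases "i = Suc N")
    case True then show ?thesis by simp
  next
    case False
    then have iN: "i \<le> N" using Suc.prems by simp
    have IH: "(\<Sum>k\<in>{i..<N}. f k - f (Suc k)) = f i - f N" "f N \<le> f i"
      using Suc.IH Suc.prems iN by auto
    have fN: "f (Suc N) \<le> f N" using Suc.prems iN by simp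
    have "(\<Sum>k\<in>{i..<Suc N}. f k - f (Suc k)) = (\<Sum>k\<in>{i..<N}. f k - f (Suc k)) + (f N - f (Suc N))"
      using iN by simp
    then show ?thesis using IH fN by simp
  qed
qed

lemma lk_sum_single': "finite S \<Longrightarrow> lk (\<Sum>j\<in>S. sg j (e j)) i = (if i \<in> S then e i else (0::nat))"
  by (simp add: lookup_sum lookup_single when_def)

lemma step:
  fixes m p n :: nat and q :: cpoly
  assumes m: "0 < m" and p: "0 < p" and pm: "p dvd m" and n: "1 < n"
    and G: "G_invariant m p n q" and q: "pv n q" and a: "\<alpha> \<in> ks q" and top: "\<And>b. b \<in> ks q \<Longrightarrow> b \<le> \<alpha>"
  shows "\<exists>\<gamma>\<in>vars n. hasTop (Pr (theta_poly m p n) \<gamma>) \<alpha> 1"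
proof -
  obtain n' where n': "n = Suc n'" using n by (cases n) auto
  define d where "d = m div p"
  define r where "r = lk \<alpha> 0 mod m"
  have md: "m = p * d" using pm by (simp add: d_def)
  have "d dvd lk \<alpha> 0" unfolding d_def by (rule GB[OF m p pm G q a]) (use n in simp)
  moreover have "d dvd m" using md by simp
  ultimately have "d dvd r" unfolding r_def by (simp add: dvd_mod)
  then obtain j where rj: "r = j * d" by (auto simp: dvd_def mult.commute)
  define \<beta> where "\<beta> i = lk \<alpha> i div m" for i
  have ai: "lk \<alpha> i = r + m * \<beta> i" if "i < n" for i
  proof -
    have "lk \<alpha> i mod m = r" unfolding r_def by (rule GA[OF m G q a that])
    then show ?thesis unfolding \<beta>_def using mod_mult_div_eq[of "lk \<alpha> i" m] by simp
  qed
  have dec: "\<beta> (Suc k) \<le> \<beta> k" if "Suc k < n" for k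
    unfolding \<beta>_def by (rule div_le_mono, rule top_sorted[OF G q a top that])
  define g where "g k = (if Suc k < n then \<beta> k - \<beta> (Suc k) else if Suc k = n then j + p * \<beta> k else 0)" for k
  define \<gamma> where "\<gamma> = (\<Sum>k<n. sg k (g k))"
  have lg: "lk \<gamma> k = (if k < n then g k else 0)" for k
    unfolding \<gamma>_def by (simp add: lk_sum_single')
  have gv: "\<gamma> \<in> vars n" unfolding \<gamma>_def by (rule vars_sum_single) simp
  have kg: "ks \<gamma> \<subseteq> {..<n}" using gv by (simp add: vars_def)
  define tp where "tp k = (if Suc k < n then (\<Sum>j\<in>{..<k+1}. sg j m) else (\<Sum>j<n. sg j d))" for k
  have ht: "hasTop (theta_poly m p n k) (tp k) 1" if "k < n" for k
  proof (cases "Suc k < n")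
    case True then show ?thesis using hasTop_theta_lt[OF m, of k n p] by (simp add: tp_def)
  next
    case False then have "k + 1 = n" using that by simp
    then show ?thesis using hasTop_theta_eq[of k n m p] False by (simp add: tp_def d_def)
  qed
  have hp: "hasTop (Pr (theta_poly m p n) \<gamma>) (\<Sum>k\<in>ks \<gamma>. smul (lk \<gamma> k) (tp k)) 1"
    unfolding Pr_def
    using hasTop_prod[of "ks \<gamma>" "\<lambda>k. theta_poly m p n k ^ lk \<gamma> k" "\<lambda>k. smul (lk \<gamma> k) (tp k)" "\<lambda>k. 1 ^ lk \<gamma> k"]
      hasTop_power[OF ht] kg by auto
  have ltp: "lk (tp k) i = (if Suc k < n then (if i < Suc k then m else 0) else (if i < n then d else 0))" for k i
    by (simp add: tp_def lk_sum_single' del: sum.lessThan_Suc)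
  have eq: "(\<Sum>k\<in>ks \<gamma>. smul (lk \<gamma> k) (tp k)) = \<alpha>"
  proof (rule poly_mapping_eqI)
    fix i
    have "lk (\<Sum>k\<in>ks \<gamma>. smul (lk \<gamma> k) (tp k)) i = (\<Sum>k\<in>ks \<gamma>. lk \<gamma> k * lk (tp k) i)"
      by (simp add: lookup_sum lk_smul)
    also have "\<dots> = (\<Sum>k<n. lk \<gamma> k * lk (tp k) i)"
      by (rule sum.mono_neutral_left) (use kg in \<open>auto simp: in_keys_iff\<close>)
    also have "\<dots> = (\<Sum>k<n. g k * lk (tp k) i)"
      by (intro sum.cong refl) (simp add: lg)
    also have "\<dots> = lk \<alpha> i"
    proof (cases "i < n")
      case False
      have "\<alpha> \<in> vars n" using q a by (auto simp: pv_iff)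
      then have "lk \<alpha> i = 0" using False by (auto simp: vars_def in_keys_iff)
      moreover have "(\<Sum>k<n. g k * lk (tp k) i) = 0" using False by (auto simp: ltp intro!: sum.neutral)
      ultimately show ?thesis by simp
    next
      case True
      then have in': "i \<le> n'" using n' by simp
      have "(\<Sum>k<n. g k * lk (tp k) i) = (\<Sum>k<n'. g k * lk (tp k) i) + g n' * lk (tp n') i"
        by (simp add: n')
      also have "g n' * lk (tp n') i = (j + p * \<beta> n') * d"
        using True by (simp add: g_def ltp n')
      also have "(\<Sum>k<n'. g k * lk (tp k) i) = (\<Sum>k<n'. if i \<le> k then m * (\<beta> k - \<beta> (Suc k)) else 0)"
        by (intro sum.cong refl) (auto simp: g_def ltp n')
      also have "\<dots> = (\<Sum>k\<in>{i..<n'}. m * (\<beta> k - \<beta> (Suc k)))"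
      proof -
        have "{k \<in> {..<n'}. i \<le> k} = {i..<n'}" by auto
        then show ?thesis using sum.inter_filter[of "{..<n'}" "\<lambda>k. m * (\<beta> k - \<beta> (Suc k))" "\<lambda>k. i \<le> k"] by simp
      qed
      also have "\<dots> = m * (\<beta> i - \<beta> n')"
        using telescope[of i n' \<beta>] dec in' n' by (simp add: sum_distrib_left[symmetric])
      finally have e1: "(\<Sum>k<n. g k * lk (tp k) i) = m * (\<beta> i - \<beta> n') + (j + p * \<beta> n') * d" .
      have le: "\<beta> n' \<le> \<beta> i" using telescope[of i n' \<beta>] dec in' n' by simp
      have "(j + p * \<beta> n') * d = r + m * \<beta> n'" using rj md by (simp add: algebra_simps)
      moreover have "m * (\<beta> i - \<beta> n') = m * \<beta> i - m * \<beta> n'" by (simp add: diff_mult_distrib2)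
      moreover have "m * \<beta> n' \<le> m * \<beta> i" using le by simp
      ultimately have "(\<Sum>k<n. g k * lk (tp k) i) = r + m * \<beta> i" using e1 by simp
      then show ?thesis using ai[OF True] by simp
    qed
    finally show "lk (\<Sum>k\<in>ks \<gamma>. smul (lk \<gamma> k) (tp k)) i = lk \<alpha> i" .
  qed
  show ?thesis using gv hp eq by auto
qed

lemma main_ind:
  fixes m p n :: nat
  assumes m: "0 < m" and p: "0 < p" and pm: "p dvd m" and n: "1 < n"
  shows "a \<in> vars n \<Longrightarrow> pv n q \<Longrightarrow> G_invariant m p n q \<Longrightarrow> (\<forall>b\<in>ks q. b \<le> a) \<Longrightarrow>
    \<exists>f. pv n f \<and> q = pcomp f (theta_poly m p n)"
proof (induction a arbitrary: q rule: wf_induct_rule[OF wfR[of n]])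
  case (1 a q)
  let ?P = "theta_poly m p n"
  show ?case
  proof (cases "q = 0")
    case True
    then show ?thesis by (intro exI[of _ 0]) simp
  next
    case False
    define \<alpha> where "\<alpha> = Max (ks q)"
    have ne: "ks q \<noteq> {}" using False by simp
    have aq: "\<alpha> \<in> ks q" unfolding \<alpha>_def using ne by (intro Max_in) auto
    have topq: "b \<le> \<alpha>" if "b \<in> ks q" for b unfolding \<alpha>_def using that by (intro Max_ge) auto
    have aa: "\<alpha> \<le> a" using 1(5) aq by auto
    obtain \<gamma> where gv: "\<gamma> \<in> vars n" and ht: "hasTop (Pr ?P \<gamma>) \<alpha> 1"
      using step[OF m p pm n 1(4) 1(3) aq topq] by blast
    define c where "c = lk q \<alpha>"
    define q' where "q' = q - pcomp (sg \<gamma> c) ?P"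
    have pcs: "pcomp (sg \<gamma> c) ?P = sg 0 c * Pr ?P \<gamma>" by (rule pcomp_single)
    have pvc: "pv n (pcomp (sg \<gamma> c) ?P)" by (rule pv_pcomp[OF pv_single[OF gv] pv_theta])
    have pq': "pv n q'" unfolding q'_def by (rule pv_diff[OF 1(3) pvc])
    have gq': "G_invariant m p n q'" unfolding q'_def by (rule ginv_diff[OF 1(4) ginv_pcomp])
    have lq': "lk q' x = lk q x - c * lk (Pr ?P \<gamma>) x" for x
      by (simp add: q'_def pcs lookup_minus lk_scale)
    have kq': "x < \<alpha>" if x: "x \<in> ks q'" for x
    proof -
      have "lk q' x \<noteq> 0" using x by (simp add: in_keys_iff)
      then have "x \<in> ks q \<or> x \<in> ks (Pr ?P \<gamma>)" by (auto simp: lq' in_keys_iff)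
      then have le: "x \<le> \<alpha>" using topq ht by (auto simp: hasTop_def)
      have "lk q' \<alpha> = 0" using ht by (simp add: lq' hasTop_def c_def)
      then have "x \<noteq> \<alpha>" using x by (auto simp: in_keys_iff)
      then show ?thesis using le by simp
    qed
    show ?thesis
    proof (cases "q' = 0")
      case True
      then have "q = pcomp (sg \<gamma> c) ?P" by (simp add: q'_def)
      then show ?thesis using pv_single[OF gv] by blast
    next
      case False
      define \<alpha>' where "\<alpha>' = Max (ks q')"
      have ne': "ks q' \<noteq> {}" using False by simp
      have aq': "\<alpha>' \<in> ks q'" unfolding \<alpha>'_def using ne' by (intro Max_in) auto
      have top': "\<forall>b\<in>ks q'. b \<le> \<alpha>'" unfolding \<alpha>'_def by (auto intro: Max_ge)
      have lt: "\<alpha>' < a" using kq'[OF aq'] aa by simp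
      have v': "\<alpha>' \<in> vars n" using pq' aq' by (auto simp: pv_iff)
      obtain f' where f': "pv n f'" "q' = pcomp f' ?P"
        using 1(1)[of \<alpha>' q'] v' 1(2) lt pq' gq' top' by auto
      have "q = q' + pcomp (sg \<gamma> c) ?P" by (simp add: q'_def)
      also have "\<dots> = pcomp (f' + sg \<gamma> c) ?P" by (simp add: f'(2) pcomp_add)
      finally show ?thesis using pv_add[OF f'(1) pv_single[OF gv]] by blast
    qed
  qed
qed

lemma KEY:
  assumes "0 < m" "0 < p" "p dvd m" "1 < n" "pv n q" "G_invariant m p n q"
  shows "\<exists>f. pv n f \<and> q = pcomp f (theta_poly m p n)"
proof (cases "q = 0")
  case True
  then show ?thesis by (intro exI[of _ 0]) simp
next
  case False
  define a where "a = Max (ks q)"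
  have ne: "ks q \<noteq> {}" using False by simp
  have aq: "a \<in> ks q" unfolding a_def using ne by (intro Max_in) auto
  have "a \<in> vars n" using assms(5) aq by (auto simp: pv_iff)
  moreover have "\<forall>b\<in>ks q. b \<le> a" unfolding a_def by (auto intro: Max_ge)
  ultimately show ?thesis using main_ind[OF assms(1-4)] assms(5,6) by blast
qed

theorem proposition2p8:
  fixes m p n :: nat and T :: "nat \<Rightarrow> 'h::{complex_inner,complete_space} \<Rightarrow> 'h"
  assumes "0 < m" and "0 < p" and "p dvd m" and "1 < n"
    and "commuting_contractions n T"
  shows "Theta_contraction m p n (theta_op m p n T) \<longleftrightarrow>
    (\<forall>q. poly_in_vars n q \<and> G_invariant m p n q \<longrightarrow>
       onorm (opeval q T) \<le> (SUP z\<in>closed_polydisc n. cmod (peval q z)))"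
proof -
  let ?P = "theta_poly m p n"
  let ?S = "theta_op m p n T"
  have T: "commuting_tuple n T" using assms(5) by (simp add: commuting_contractions_def)
  have S: "?S k = opeval (?P k) T" for k by (simp add: theta_op_def)
  have Sc: "commuting_tuple n ?S"
    unfolding commuting_tuple_def
  proof (intro conjI allI impI)
    fix i assume "i < n"
    show "bcl (?S i)" unfolding S by (rule bcl_opeval[OF T pv_theta])
  next
    fix i j assume "i < n" "j < n"
    show "?S i \<circ> ?S j = ?S j \<circ> ?S i"
    proof
      fix x
      have "(?S i \<circ> ?S j) x = opeval (?P i * ?P j) T x"
        by (simp add: S opeval_mult[OF T pv_theta pv_theta])
      also have "\<dots> = opeval (?P j * ?P i) T x" by (simp add: mult.commute)
      also have "\<dots> = (?S j \<circ> ?S i) x"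
        by (simp add: S opeval_mult[OF T pv_theta pv_theta])
      finally show "(?S i \<circ> ?S j) x = (?S j \<circ> ?S i) x" .
    qed
  qed
  have opc: "opeval (pcomp f ?P) T = opeval f ?S" if "pv n f" for f
  proof
    fix x show "opeval (pcomp f ?P) T x = opeval f ?S x"
      using opeval_pcomp[OF T that pv_theta] by (simp add: theta_op_def)
  qed
  have pec: "peval (pcomp f ?P) z = peval f (theta m p n z)" for f z
    by (simp add: peval_pcomp theta_def)
  have supc: "(SUP w\<in>closed_Theta m p n. cmod (peval f w)) = (SUP z\<in>closed_polydisc n. cmod (peval (pcomp f ?P) z))" for f
    by (simp add: closed_Theta_def pec image_image)
  have ginv: "G_invariant m p n (pcomp f ?P)" for f
    by (simp add: G_invariant_def pec theta_G_inv)
  show ?thesis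
  proof
    assume TC: "Theta_contraction m p n ?S"
    show "\<forall>q. pv n q \<and> G_invariant m p n q \<longrightarrow> onorm (opeval q T) \<le> (SUP z\<in>closed_polydisc n. cmod (peval q z))"
    proof (intro allI impI)
      fix q assume q: "pv n q \<and> G_invariant m p n q"
      obtain f where f: "pv n f" "q = pcomp f ?P" using KEY[OF assms(1-4)] q by blast
      have "onorm (opeval f ?S) \<le> (SUP w\<in>closed_Theta m p n. cmod (peval f w))"
        using TC f(1) by (simp add: Theta_contraction_def)
      then show "onorm (opeval q T) \<le> (SUP z\<in>closed_polydisc n. cmod (peval q z))"
        using f by (simp add: opc supc)
    qed
  next
    assume vN: "\<forall>q. pv n q \<and> G_invariant m p n q \<longrightarrow> onorm (opeval q T) \<le> (SUP z\<in>closed_polydisc n. cmod (peval q z))"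
    show "Theta_contraction m p n ?S"
      unfolding Theta_contraction_def
    proof (intro conjI allI impI Sc)
      fix f assume f: "pv n f"
      have "pv n (pcomp f ?P)" by (rule pv_pcomp[OF f pv_theta])
      then have "onorm (opeval (pcomp f ?P) T) \<le> (SUP z\<in>closed_polydisc n. cmod (peval (pcomp f ?P) z))"
        using vN ginv by blast
      then show "onorm (opeval f ?S) \<le> (SUP w\<in>closed_Theta m p n. cmod (peval f w))"
        by (simp add: opc[OF f] supc)
    qed
  qed
qed

end
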